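(* Let $\lambda\ge0$ and $t\in[0,\tilde p]$. The penalised conjugate gradient estimator satisfies $$\big\|\widehat\Sigma_\lambda^{1/2}(\hat\beta^{\mathrm{CG}}_{\lambda,t}-\beta_\lambda)\big\|^2\le 2\,\big\|\widehat\Sigma_\lambda^{1/2}\exp(-\rho_t\widehat\Sigma_\lambda/2)\beta_\lambda\big\|^2+2\,\big\|(\rho_t\widehat\Sigma_\lambda\wedge 1)^{1/2}\varepsilon_\lambda\big\|^2,$$ where $\rho_t=|(R^{\mathrm{CG}}_t)'(0)|$ and $(\rho_t\widehat\Sigma_\lambda\wedge1)^{1/2}$ denotes the matrix $f(\widehat\Sigma_\lambda)$ for $f(x)=(\rho_tx\wedge1)^{1/2}$, $x\ge0$.
   Context: Let $n,p\in\mathbb{N}$. Observations $(x_i,y_i)$, $i=1,\dots,n$, are i.i.d. with $x_i\in\mathbb{R}^p$, $y_i\in\mathbb{R}$, $y_i=x_i^\top\beta_0+\varepsilon_i$, $\mathbb{E}[\varepsilon_i\mid x_i]=0$, $\operatorname{Var}(\varepsilon_i\mid x_i)=\sigma^2>0$. $X\in\mathbb{R}^{n\times p}$ has rows $x_i^\top$, $y=(y_i)$, $\varepsilon=(\varepsilon_i)$; assume $\beta_0=X^+X\beta_0$. Matrix functions are defined by functional calculus. $\widehat\Sigma=\frac1nX^\top X$ has eigenvalues $s_1\ge\dots\ge s_p\ge0$ with orthonormal eigenvectors $v_1,\dots,v_p$; $\widehat\Sigma_\lambda=\widehat\Sigma+\lambda I_p$, $\widehat\Sigma_0^{-1}:=\widehat\Sigma^+$,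 $\widehat\Sigma_\lambda^{-1/2}=(\widehat\Sigma_\lambda^{-1})^{1/2}$. Define $y_\lambda=\frac1n\widehat\Sigma_\lambda^{-1/2}X^\top y$, $\beta_\lambda=\widehat\Sigma_\lambda^{-1}\widehat\Sigma\beta_0$, $\varepsilon_\lambda=\frac1n\widehat\Sigma_\lambda^{-1/2}X^\top\varepsilon$. Conjugate gradients: let $\tilde p$ be the number of distinct eigenvalues of $\widehat\Sigma_\lambda$, and assume $\sum_{j:\,s_j=s_i}\langle X^\top y,v_j\rangle^2>0$ for all $i=1,\dots,p$. For $k=0,\dots,\tilde p$ let $R^{\mathrm{CG}}_k$ be the minimiser of $\|P(\widehat\Sigma_\lambda)y_\lambda\|^2$ over polynomials $P$ of degree $k$ with $P(0)=1$ (so $R^{\mathrm{CG}}_0\equiv1$). For $t=k+\alpha$ with $k\in\{0,\dots,\tilde p-1\}$, $\alpha\in(0,1]$, set $R^{\mathrm{CG}}_t=(1-\alpha)R^{\mathrm{CG}}_k+\alpha R^{\mathrm{CG}}_{k+1}$. The (interpolated) CG estimator is $\hat\beta^{\mathrm{CG}}_{\lambda,t}=\widehat\Sigma_\lambda^{-1/2}(I_p-R^{\mathrm{CG}}_t(\widehat\Sigma_\lambda))y_\lambda$, $t\in[0,\tilde p]$; for integer $t=k$ these are the iterates of the conjugate gradient algorithm started at $0$ for minimising $\frac1{2n}\|y-X\beta\|^2+\frac\lambda2\|\beta\|^2$. *)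

theory Defs
  imports "HOL-Analysis.Analysis" "HOL-Computational_Algebra.Polynomial"
begin

definition outer :: "real^'n \<Rightarrow> real^'n^'n" where
  "outer v = (\<chi> a b. v$a * v$b)"

definition matfun :: "(real \<Rightarrow> real) \<Rightarrow> real^'n^'n \<Rightarrow> real^'n^'n" where
  "matfun f A = (SOME B. \<exists>(v::'n \<Rightarrow> real^'n) (s::'n \<Rightarrow> real).
      (\<forall>i j. v i \<bullet> v j = (if i = j then 1 else 0)) \<and>
      (\<forall>i. A *v v i = s i *\<^sub>R v i) \<and>
      B = (\<Sum>i\<in>UNIV. f (s i) *\<^sub>R outer (v i)))"

definition pinv :: "real^'m^'n \<Rightarrow> real^'n^'m" where
  "pinv A = (THE B. A ** B ** A = A \<and> B ** A ** B = B \<and>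
       transpose (A ** B) = A ** B \<and> transpose (B ** A) = B ** A)"

definition Sigma_hat :: "real^'p^'n \<Rightarrow> real^'p^'p" where
  "Sigma_hat X = (1 / real CARD('n)) *\<^sub>R (transpose X ** X)"

definition Sigma_lam :: "real \<Rightarrow> real^'p^'n \<Rightarrow> real^'p^'p" where
  "Sigma_lam lam X = Sigma_hat X + lam *\<^sub>R mat 1"

definition Sigma_lam_inv :: "real \<Rightarrow> real^'p^'n \<Rightarrow> real^'p^'p" where
  "Sigma_lam_inv lam X = (if lam = 0 then pinv (Sigma_hat X) else matrix_inv (Sigma_lam lam X))"

definition Sigma_lam_invsqrt :: "real \<Rightarrow> real^'p^'n \<Rightarrow> real^'p^'p" where
  "Sigma_lam_invsqrt lam X = matfun sqrt (Sigma_lam_inv lam X)"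

definition y_lam :: "real \<Rightarrow> real^'p^'n \<Rightarrow> real^'n \<Rightarrow> real^'p" where
  "y_lam lam X y = (1 / real CARD('n)) *\<^sub>R (Sigma_lam_invsqrt lam X *v (transpose X *v y))"

definition beta_lam :: "real \<Rightarrow> real^'p^'n \<Rightarrow> real^'p \<Rightarrow> real^'p" where
  "beta_lam lam X beta0 = Sigma_lam_inv lam X *v (Sigma_hat X *v beta0)"

definition eps_lam :: "real \<Rightarrow> real^'p^'n \<Rightarrow> real^'n \<Rightarrow> real^'p" where
  "eps_lam lam X eps = (1 / real CARD('n)) *\<^sub>R (Sigma_lam_invsqrt lam X *v (transpose X *v eps))"

definition num_distinct_eigs :: "real^'n^'n \<Rightarrow> nat" where
  "num_distinct_eigs S = card {c. \<exists>v. v \<noteq> 0 \<and> S *v v = c *\<^sub>R v}"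

definition cg_poly :: "real^'n^'n \<Rightarrow> real^'n \<Rightarrow> nat \<Rightarrow> real poly" where
  "cg_poly S b k = (THE P. degree P \<le> k \<and> poly P 0 = 1 \<and>
      (\<forall>Q. degree Q \<le> k \<and> poly Q 0 = 1 \<longrightarrow>
          (norm (matfun (poly P) S *v b))\<^sup>2 \<le> (norm (matfun (poly Q) S *v b))\<^sup>2))"

text \<open>Interpolated residual polynomial R_t: for t = k + alpha, alpha in (0,1],
  R_t = (1-alpha) R_k + alpha R_{k+1}; R_0 = R^CG_0.\<close>
definition cg_poly_interp :: "real^'n^'n \<Rightarrow> real^'n \<Rightarrow> real \<Rightarrow> real poly" where
  "cg_poly_interp S b t =
     (if t \<le> 0 then cg_poly S b 0
      else (let k = nat (\<lceil>t\<rceil> - 1); \<alpha> = t - real k in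
            smult (1 - \<alpha>) (cg_poly S b k) + smult \<alpha> (cg_poly S b (Suc k))))"

definition beta_cg :: "real \<Rightarrow> real^'p^'n \<Rightarrow> real^'n \<Rightarrow> real \<Rightarrow> real^'p" where
  "beta_cg lam X y t =
     Sigma_lam_invsqrt lam X *v
       ((mat 1 - matfun (poly (cg_poly_interp (Sigma_lam lam X) (y_lam lam X y) t)) (Sigma_lam lam X))
          *v y_lam lam X y)"

definition rho_cg :: "real \<Rightarrow> real^'p^'n \<Rightarrow> real^'n \<Rightarrow> real \<Rightarrow> real" where
  "rho_cg lam X y t = \<bar>poly (pderiv (cg_poly_interp (Sigma_lam lam X) (y_lam lam X y) t)) 0\<bar>"

end

theory Submission
  imports Defs
begin

definition ipw :: "('i::finite \<Rightarrow> real) \<Rightarrow> ('i \<Rightarrow> real) \<Rightarrow> real poly \<Rightarrow> real poly \<Rightarrow> real" where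
  "ipw w mu P Q = (\<Sum>i\<in>UNIV. w i * (poly P (mu i) * poly Q (mu i)))"

lemma ipw_sym: "ipw w mu P Q = ipw w mu Q P"
  unfolding ipw_def by (simp add: mult.commute)

lemma ipw_add2: "ipw w mu P (Q1 + Q2) = ipw w mu P Q1 + ipw w mu P Q2"
  unfolding ipw_def by (simp add: algebra_simps sum.distrib)

lemma ipw_add1: "ipw w mu (Q1 + Q2) P = ipw w mu Q1 P + ipw w mu Q2 P"
  unfolding ipw_def by (simp add: algebra_simps sum.distrib)

lemma ipw_diff2: "ipw w mu P (Q1 - Q2) = ipw w mu P Q1 - ipw w mu P Q2"
  unfolding ipw_def by (simp add: algebra_simps sum_subtractf)

lemma ipw_diff1: "ipw w mu (Q1 - Q2) P = ipw w mu Q1 P - ipw w mu Q2 P"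
  unfolding ipw_def by (simp add: algebra_simps sum_subtractf)

lemma ipw_smult2: "ipw w mu P (smult c Q) = c * ipw w mu P Q"
  unfolding ipw_def by (simp add: algebra_simps sum_distrib_left)

lemma ipw_smult1: "ipw w mu (smult c Q) P = c * ipw w mu Q P"
  unfolding ipw_def by (simp add: algebra_simps sum_distrib_left)

lemma quad_zero:
  fixes a b :: real
  assumes "b \<ge> 0" and "\<And>e. 0 \<le> 2 * e * a + e\<^sup>2 * b"
  shows "a = 0"
proof -
  have "0 \<le> 2 * (- a / (b + 1)) * a + (- a / (b + 1))\<^sup>2 * b" by (rule assms(2))
  also have "\<dots> = a\<^sup>2 * (- b - 2) / (b + 1)\<^sup>2"
    using assms(1) by (simp add: divide_simps power2_eq_square) (simp add: algebra_simps)
  finally have "0 \<le> a\<^sup>2 * (- b - 2) / (b + 1)\<^sup>2" .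
  moreover have "(b+1)\<^sup>2 > 0" using assms(1) by simp
  ultimately have "a\<^sup>2 * (- b - 2) \<ge> 0" by (simp add: zero_le_divide_iff)
  hence "a\<^sup>2 * (b + 2) \<le> 0" by (simp add: algebra_simps)
  moreover have "a\<^sup>2 * (b + 2) \<ge> 0" using assms(1) by simp
  ultimately have "a\<^sup>2 * (b + 2) = 0" by linarith
  thus ?thesis using assms(1) by simp
qed

lemma quad_neg:
  fixes a b :: real
  assumes "b \<ge> 0" and "a \<noteq> 0"
  shows "\<exists>e. 2 * e * a + e\<^sup>2 * b < 0"
proof -
  have "(b+1)\<^sup>2 > 0" using assms(1) by simp
  have "2 * (- a / (b + 1)) * a + (- a / (b + 1))\<^sup>2 * b = a\<^sup>2 * (- b - 2) / (b + 1)\<^sup>2"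
    using assms(1) by (simp add: divide_simps power2_eq_square) (simp add: algebra_simps)
  also have "\<dots> < 0" using assms \<open>(b+1)\<^sup>2 > 0\<close>
    by (intro divide_neg_pos mult_pos_neg) auto
  finally show ?thesis by blast
qed

definition feas :: "nat \<Rightarrow> real poly \<Rightarrow> bool" where
  "feas K P \<longleftrightarrow> degree P \<le> K \<and> poly P 0 = 1"

definition cgw :: "('i::finite \<Rightarrow> real) \<Rightarrow> ('i \<Rightarrow> real) \<Rightarrow> nat \<Rightarrow> real poly" where
  "cgw w mu K = (THE P. degree P \<le> K \<and> poly P 0 = 1 \<and>
      (\<forall>Q. degree Q \<le> K \<and> poly Q 0 = 1 \<longrightarrow> ipw w mu P P \<le> ipw w mu Q Q))"

locale cgsetup =
  fixes w mu :: "'i::finite \<Rightarrow> real"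
  assumes mu_pos: "\<And>i. mu i > 0" and w_nn: "\<And>i. w i \<ge> 0"
    and w_cover: "\<And>i. \<exists>j. mu j = mu i \<and> w j > 0"
begin

abbreviation "m \<equiv> card (range mu)"
abbreviation "ip \<equiv> ipw w mu"

lemma ip_nn: "ip P P \<ge> 0"
  unfolding ipw_def by (intro sum_nonneg) (simp add: w_nn)

lemma ip_zero_vanish:
  assumes "ip P P = 0" shows "poly P (mu i) = 0"
proof -
  obtain j where j: "mu j = mu i" "w j > 0" using w_cover by blast
  have "\<forall>k\<in>UNIV. w k * (poly P (mu k) * poly P (mu k)) = 0"
    using assms unfolding ipw_def
    by (subst sum_nonneg_eq_0_iff[symmetric]) (auto simp: w_nn)
  hence "w j * (poly P (mu j) * poly P (mu j)) = 0" by blast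
  with j show ?thesis by simp
qed

lemma vanish_zero:
  assumes "\<And>i. poly P (mu i) = 0" and "degree P < m"
  shows "P = 0"
proof (rule ccontr)
  assume "P \<noteq> 0"
  have "range mu \<subseteq> {x. poly P x = 0}" using assms(1) by auto
  hence "m \<le> card {x. poly P x = 0}"
    using poly_roots_finite[OF \<open>P \<noteq> 0\<close>] by (intro card_mono) auto
  also have "\<dots> \<le> degree P" by (rule card_poly_roots_bound[OF \<open>P \<noteq> 0\<close>])
  finally show False using assms(2) by simp
qed

lemma vanish_zero0:
  assumes "\<And>i. poly P (mu i) = 0" and "poly P 0 = 0" and "degree P \<le> m"
  shows "P = 0"
proof (rule ccontr)
  assume "P \<noteq> 0"
  have "0 \<notin> range mu" using mu_pos by (metis imageE less_irrefl)
  have "insert 0 (range mu) \<subseteq> {x. poly P x = 0}" using assms by auto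
  hence "card (insert 0 (range mu)) \<le> card {x. poly P x = 0}"
    using poly_roots_finite[OF \<open>P \<noteq> 0\<close>] by (intro card_mono) auto
  also have "\<dots> \<le> degree P" by (rule card_poly_roots_bound[OF \<open>P \<noteq> 0\<close>])
  finally show False using assms(3) \<open>0 \<notin> range mu\<close> by simp
qed

definition vc :: "real poly \<Rightarrow> real^'i" where
  "vc P = (\<chi> i. sqrt (w i) * poly P (mu i))"

lemma vc_add: "vc (P + Q) = vc P + vc Q"
  unfolding vc_def by (simp add: vec_eq_iff algebra_simps)

lemma vc_smult: "vc (smult c P) = c *\<^sub>R vc P"
  unfolding vc_def by (simp add: vec_eq_iff algebra_simps)

lemma vc_norm: "(norm (vc P))\<^sup>2 = ip P P"
proof -
  have "(norm (vc P))\<^sup>2 = (\<Sum>i\<in>UNIV. (sqrt (w i) * poly P (mu i))\<^sup>2)"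
    unfolding vc_def norm_vec_def L2_set_def by (simp add: sum_nonneg)
  also have "\<dots> = ip P P" unfolding ipw_def
    by (rule sum.cong) (auto simp: power_mult_distrib w_nn power2_eq_square)
  finally show ?thesis .
qed

lemma min_exists:
  "\<exists>P. feas K P \<and> (\<forall>Q. feas K Q \<longrightarrow> ip P P \<le> ip Q Q)"
proof -
  define V where "V = vc ` {P. degree P \<le> K \<and> poly P 0 = 0}"
  have sub: "subspace V"
    unfolding subspace_def V_def
  proof (intro conjI ballI allI)
    show "0 \<in> vc ` {P. degree P \<le> K \<and> poly P 0 = 0}"
      by (rule image_eqI[of _ _ 0]) (auto simp: vc_def vec_eq_iff)
  next
    fix x y assume "x \<in> vc ` {P. degree P \<le> K \<and> poly P 0 = 0}" "y \<in> vc ` {P. degree P \<le> K \<and> poly P 0 = 0}"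
    then obtain P Q where "x = vc P" "y = vc Q" "degree P \<le> K" "poly P 0 = 0" "degree Q \<le> K" "poly Q 0 = 0"
      by auto
    thus "x + y \<in> vc ` {P. degree P \<le> K \<and> poly P 0 = 0}"
      by (intro image_eqI[of _ _ "P + Q"]) (auto simp: vc_add intro: degree_add_le)
  next
    fix c x assume "x \<in> vc ` {P. degree P \<le> K \<and> poly P 0 = 0}"
    then obtain P where "x = vc P" "degree P \<le> K" "poly P 0 = 0" by auto
    thus "c *\<^sub>R x \<in> vc ` {P. degree P \<le> K \<and> poly P 0 = 0}"
      by (intro image_eqI[of _ _ "smult c P"]) (auto simp: vc_smult)
  qed
  define S where "S = (\<lambda>x. vc 1 + x) ` V"
  have "closed S" unfolding S_def using closed_subspace[OF sub] by (rule closed_translation)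
  have S_eq: "S = vc ` {P. feas K P}"
  proof
    show "S \<subseteq> vc ` {P. feas K P}"
    proof
      fix x assume "x \<in> S"
      then obtain P where "x = vc 1 + vc P" "degree P \<le> K" "poly P 0 = 0"
        unfolding S_def V_def by auto
      thus "x \<in> vc ` {P. feas K P}"
        by (intro image_eqI[of _ _ "1 + P"]) (auto simp: vc_add feas_def intro: degree_add_le)
    qed
  next
    show "vc ` {P. feas K P} \<subseteq> S"
    proof
      fix x assume "x \<in> vc ` {P. feas K P}"
      then obtain P where "x = vc P" "feas K P" by auto
      hence "x = vc 1 + vc (P - 1)" "degree (P - 1) \<le> K" "poly (P - 1) 0 = 0"
        using vc_add[of 1 "P - 1"] by (auto simp: feas_def intro: degree_diff_le)
      thus "x \<in> S" unfolding S_def V_def by auto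
    qed
  qed
  have "vc 1 \<in> S" unfolding S_eq by (rule imageI) (auto simp: feas_def)
  hence "S \<noteq> {}" by blast
  obtain x where x: "x \<in> S" "\<And>y. y \<in> S \<Longrightarrow> dist 0 x \<le> dist 0 y"
    using distance_attains_inf[OF \<open>closed S\<close> \<open>S \<noteq> {}\<close>] by blast
  obtain P where P: "x = vc P" "feas K P" using x(1) unfolding S_eq by auto
  have "\<forall>Q. feas K Q \<longrightarrow> ip P P \<le> ip Q Q"
  proof (intro allI impI)
    fix Q assume "feas K Q"
    hence "norm (vc P) \<le> norm (vc Q)" using x(2)[of "vc Q"] P unfolding S_eq by auto
    hence "(norm (vc P))\<^sup>2 \<le> (norm (vc Q))\<^sup>2" by (simp add: power_mono)
    thus "ip P P \<le> ip Q Q" by (simp add: vc_norm)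
  qed
  with P show ?thesis by blast
qed

lemma min_unique:
  assumes "K \<le> m" "feas K P1" "feas K P2"
    "\<forall>Q. feas K Q \<longrightarrow> ip P1 P1 \<le> ip Q Q" "\<forall>Q. feas K Q \<longrightarrow> ip P2 P2 \<le> ip Q Q"
  shows "P1 = P2"
proof -
  define P where "P = smult (1/2) (P1 + P2)"
  have "feas K P" using assms(2,3) unfolding P_def feas_def
    by (auto intro: order.trans[OF degree_add_le])
  hence le: "ip P1 P1 \<le> ip P P" using assms(4) by blast
  have eq: "ip P1 P1 = ip P2 P2" using assms by (meson order_antisym)
  have "ip P P = (\<Sum>i\<in>UNIV. (w i * (poly P1 (mu i) * poly P1 (mu i)) + w i * (poly P2 (mu i) * poly P2 (mu i))) / 2
       - w i * (poly (P1 - P2) (mu i) * poly (P1 - P2) (mu i)) / 4)"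
    unfolding P_def ipw_def by (rule sum.cong) (auto simp: field_simps)
  also have "\<dots> = (ip P1 P1 + ip P2 P2) / 2 - ip (P1 - P2) (P1 - P2) / 4"
    unfolding ipw_def by (simp add: sum_divide_distrib[symmetric] sum_subtractf sum.distrib)
  finally have "ip P P = (ip P1 P1 + ip P2 P2) / 2 - ip (P1 - P2) (P1 - P2) / 4" .
  hence "ip P P = ip P1 P1 - ip (P1 - P2) (P1 - P2) / 4" using eq by simp
  hence h4: "ip (P1 - P2) (P1 - P2) / 4 \<le> 0" using le by linarith
  hence "ip (P1 - P2) (P1 - P2) \<le> 0" by simp
  hence z: "ip (P1 - P2) (P1 - P2) = 0" using ip_nn[of "P1 - P2"] by linarith
  have "P1 - P2 = 0"
    by (rule vanish_zero0) (use ip_zero_vanish[OF z] assms(1,2,3) in \<open>auto simp: feas_def intro: order.trans[OF degree_diff_le]\<close>)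
  thus ?thesis by simp
qed

lemma cgw_props:
  assumes "K \<le> m"
  shows "feas K (cgw w mu K)" "\<And>Q. feas K Q \<Longrightarrow> ip (cgw w mu K) (cgw w mu K) \<le> ip Q Q"
proof -
  obtain P where P: "feas K P" "\<forall>Q. feas K Q \<longrightarrow> ip P P \<le> ip Q Q" using min_exists by blast
  have "cgw w mu K = P"
    unfolding cgw_def
  proof (rule the_equality)
    show "degree P \<le> K \<and> poly P 0 = 1 \<and> (\<forall>Q. degree Q \<le> K \<and> poly Q 0 = 1 \<longrightarrow> ip P P \<le> ip Q Q)"
      using P by (auto simp: feas_def)
  next
    fix P' assume "degree P' \<le> K \<and> poly P' 0 = 1 \<and> (\<forall>Q. degree Q \<le> K \<and> poly Q 0 = 1 \<longrightarrow> ip P' P' \<le> ip Q Q)"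
    thus "P' = P" using min_unique[OF assms _ P(1) _ P(2)] by (auto simp: feas_def)
  qed
  thus "feas K (cgw w mu K)" "\<And>Q. feas K Q \<Longrightarrow> ip (cgw w mu K) (cgw w mu K) \<le> ip Q Q"
    using P by auto
qed

end

context cgsetup
begin

abbreviation "RR K \<equiv> cgw w mu K"
definition "cc K = coeff (RR K) K"
definition "TT K = ip (RR K) (monom 1 (Suc K))"
definition "SS K = ip (RR K) (pCons 0 (RR K))"

lemma ip_expand: "ip (A + smult e Q) (A + smult e Q) = ip A A + 2 * e * ip A Q + e\<^sup>2 * ip Q Q"
  by (simp add: ipw_add1 ipw_add2 ipw_smult1 ipw_smult2 ipw_sym[of w mu Q A] power2_eq_square algebra_simps)

lemma orth:
  assumes "K \<le> m" "degree Q \<le> K" "poly Q 0 = 0"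
  shows "ip (RR K) Q = 0"
proof -
  have "\<And>e. 0 \<le> 2 * e * ip (RR K) Q + e\<^sup>2 * ip Q Q"
  proof -
    fix e
    have "feas K (RR K + smult e Q)"
      using cgw_props(1)[OF assms(1)] assms(2,3) unfolding feas_def
      by (auto intro: order.trans[OF degree_add_le])
    hence "ip (RR K) (RR K) \<le> ip (RR K + smult e Q) (RR K + smult e Q)"
      using cgw_props(2)[OF assms(1)] by blast
    thus "0 \<le> 2 * e * ip (RR K) Q + e\<^sup>2 * ip Q Q" unfolding ip_expand by linarith
  qed
  thus ?thesis by (rule quad_zero[OF ip_nn])
qed

lemma cgw0: "RR 0 = 1"
proof -
  have "feas 0 (RR 0)" using cgw_props(1)[of 0] by simp
  hence "degree (RR 0) = 0" "poly (RR 0) 0 = 1" unfolding feas_def by auto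
  thus ?thesis by (metis degree_0_id poly_0_coeff_0 one_pCons)
qed

lemma ST: assumes "K \<le> m" shows "SS K = cc K * TT K"
proof -
  define Q where "Q = pCons 0 (RR K - smult (cc K) (monom 1 K))"
  have "degree Q \<le> K"
    unfolding Q_def
  proof (rule degree_le, intro allI impI)
    fix i assume "K < i"
    then obtain j where j: "i = Suc j" "K \<le> j" by (cases i) auto
    have "coeff (RR K) j = (if j = K then cc K else 0)"
      using j cgw_props(1)[OF assms] unfolding feas_def cc_def
      by (auto intro: coeff_eq_0)
    thus "coeff (pCons 0 (RR K - smult (cc K) (monom 1 K))) i = 0"
      using j by (auto simp: coeff_monom)
  qed
  moreover have "poly Q 0 = 0" unfolding Q_def by simp
  ultimately have "ip (RR K) Q = 0" by (rule orth[OF assms])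
  moreover have "Q = pCons 0 (RR K) - smult (cc K) (monom 1 (Suc K))"
    unfolding Q_def by (simp add: monom_Suc)
  ultimately show ?thesis unfolding SS_def TT_def by (simp add: ipw_diff2 ipw_smult2)
qed

lemma SS_pos: assumes "K < m" shows "SS K > 0"
proof -
  have eq: "SS K = (\<Sum>i\<in>UNIV. (w i * mu i) * (poly (RR K) (mu i))\<^sup>2)"
    unfolding SS_def ipw_def by (rule sum.cong) (auto simp: power2_eq_square algebra_simps)
  have nn: "\<And>i. 0 \<le> (w i * mu i) * (poly (RR K) (mu i))\<^sup>2"
    using w_nn mu_pos by (simp add: less_imp_le)
  have "SS K \<ge> 0" unfolding eq by (intro sum_nonneg nn)
  moreover have "SS K \<noteq> 0"
  proof
    assume "SS K = 0"
    hence all0: "\<forall>i\<in>UNIV. (w i * mu i) * (poly (RR K) (mu i))\<^sup>2 = 0"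
      unfolding eq by (subst sum_nonneg_eq_0_iff[symmetric]) (auto intro: nn)
    have "\<And>i. poly (RR K) (mu i) = 0"
    proof -
      fix i obtain j where j: "mu j = mu i" "w j > 0" using w_cover by blast
      thus "poly (RR K) (mu i) = 0" using all0 mu_pos[of j] by (metis UNIV_I mult_eq_0_iff order_less_irrefl power_eq_0_iff)
    qed
    moreover have "degree (RR K) < m"
      using cgw_props(1)[of K] assms unfolding feas_def by auto
    ultimately have "RR K = 0" by (rule vanish_zero)
    thus False using cgw_props(1)[of K] assms unfolding feas_def by auto
  qed
  ultimately show ?thesis by simp
qed

lemma decrease:
  assumes "Suc K \<le> m"
  shows "ip (RR K) (RR K) - ip (RR (Suc K)) (RR (Suc K)) = - cc (Suc K) * TT K"
    and "ip (RR K) (RR K) - ip (RR (Suc K)) (RR (Suc K)) > 0"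
proof -
  define A where "A = RR K"
  define B where "B = RR (Suc K)"
  have fA: "feas K A" unfolding A_def using cgw_props(1)[of K] assms by simp
  have fB: "feas (Suc K) B" unfolding B_def using cgw_props(1)[of "Suc K"] assms by simp
  have i1: "ip B (A - B) = 0"
  proof -
    have "degree (A - B) \<le> Suc K" using fA fB unfolding feas_def
      by (intro degree_diff_le) auto
    moreover have "poly (A - B) 0 = 0" using fA fB unfolding feas_def by simp
    ultimately show ?thesis unfolding B_def by (rule orth[OF assms])
  qed
  define Q where "Q = A - B + smult (cc (Suc K)) (monom 1 (Suc K))"
  have "degree Q \<le> K"
    unfolding Q_def
  proof (rule degree_le, intro allI impI)
    fix i assume "K < i"
    have "coeff A i = 0" using fA \<open>K < i\<close> unfolding feas_def by (auto intro: coeff_eq_0)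
    moreover have "i > Suc K \<Longrightarrow> coeff B i = 0" using fB unfolding feas_def by (auto intro: coeff_eq_0)
    ultimately show "coeff (A - B + smult (cc (Suc K)) (monom 1 (Suc K))) i = 0"
      using \<open>K < i\<close> unfolding cc_def B_def[symmetric] by (cases "i = Suc K") (auto simp: coeff_monom)
  qed
  moreover have "poly Q 0 = 0" unfolding Q_def using fA fB by (simp add: feas_def poly_monom)
  ultimately have i2: "ip A Q = 0" unfolding A_def using assms by (intro orth) auto
  have "ip A A - ip B B = ip A (A - B) + ip B (A - B)"
    by (simp add: ipw_diff2 ipw_sym[of w mu A B])
  also have "ip A (A - B) = - cc (Suc K) * TT K"
    using i2 unfolding Q_def TT_def A_def[symmetric] by (simp add: ipw_add2 ipw_smult2)
  finally show eq: "ip (RR K) (RR K) - ip (RR (Suc K)) (RR (Suc K)) = - cc (Suc K) * TT K"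
    using i1 unfolding A_def B_def by simp
  have "TT K \<noteq> 0" using ST[of K] SS_pos[of K] assms by auto
  then obtain e where e: "2 * e * TT K + e\<^sup>2 * ip (monom 1 (Suc K)) (monom 1 (Suc K)) < 0"
    using quad_neg[OF ip_nn] by blast
  have "feas (Suc K) (A + smult e (monom 1 (Suc K)))"
  proof -
    have "degree (smult e (monom (1::real) (Suc K))) \<le> Suc K"
      by (rule order.trans[OF degree_smult_le]) (simp add: degree_monom_le)
    thus ?thesis using fA unfolding feas_def by (auto simp: poly_monom intro!: degree_add_le)
  qed
  hence "ip B B \<le> ip (A + smult e (monom 1 (Suc K))) (A + smult e (monom 1 (Suc K)))"
    unfolding B_def using cgw_props(2)[OF assms] by blast
  also have "\<dots> < ip A A" unfolding ip_expand using e unfolding TT_def A_def by linarith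
  finally show "ip (RR K) (RR K) - ip (RR (Suc K)) (RR (Suc K)) > 0" unfolding A_def B_def by simp
qed

lemma cc_sign: "K \<le> m \<Longrightarrow> (-1)^K * cc K > 0"
proof (induction K)
  case 0 thus ?case by (simp add: cc_def cgw0)
next
  case (Suc K)
  have a: "(-1)^K * cc K > 0" using Suc by simp
  have b: "cc (Suc K) * TT K < 0" using decrease[OF Suc.prems] by simp
  have c: "cc K * TT K > 0" using ST[of K] SS_pos[of K] Suc.prems by simp
  show ?case
  proof (cases "even K")
    case True
    hence "cc K > 0" using a by simp
    hence "TT K > 0" using c by (simp add: zero_less_mult_iff)
    hence "cc (Suc K) < 0" using b by (simp add: mult_less_0_iff)
    thus ?thesis using True by simp
  next
    case False
    hence "cc K < 0" using a by simp
    hence "TT K < 0" using c by (simp add: zero_less_mult_iff)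
    hence "cc (Suc K) > 0" using b by (simp add: mult_less_0_iff)
    thus ?thesis using False by simp
  qed
qed

end

lemma even_roots_const_sign:
  fixes H :: "real poly"
  assumes "H \<noteq> 0" "\<forall>z>0. poly H z = 0 \<longrightarrow> even (order z H)"
  shows "(\<forall>x>0. poly H x \<ge> 0) \<or> (\<forall>x>0. poly H x \<le> 0)"
  using assms
proof (induction "degree H" arbitrary: H rule: less_induct)
  case less
  show ?case
  proof (cases "\<exists>z>0. poly H z = 0")
    case False
    show ?thesis
    proof (rule ccontr)
      assume "\<not> ?thesis"
      then obtain a b where ab: "a > 0" "poly H a < 0" "b > 0" "poly H b > 0"
        by (auto simp: not_le)
      have "a \<noteq> b" using ab by auto
      hence "\<exists>z>0. poly H z = 0"
      proof (cases "a < b")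
        case True
        then obtain x where "x > a" "x < b" "poly H x = 0"
          using poly_IVT[of a b H] ab by (auto simp: mult_neg_pos)
        thus ?thesis using ab by (intro exI[of _ x]) auto
      next
        case False
        hence "b < a" using \<open>a \<noteq> b\<close> by simp
        then obtain x where "x > b" "x < a" "poly H x = 0"
          using poly_IVT[of b a H] ab by (auto simp: mult_pos_neg)
        thus ?thesis using ab by (intro exI[of _ x]) auto
      qed
      thus False using False by blast
    qed
  next
    case True
    then obtain z where z: "z > 0" "poly H z = 0" by blast
    have "order z H \<noteq> 0" using z less.prems(1) order_root by blast
    moreover have "even (order z H)" using less.prems(2) z by blast
    ultimately have "2 \<le> order z H" by presburger
    hence "[:-z,1:]^2 dvd H" using order_divides by blast
    then obtain H' where H': "H = [:-z,1:]^2 * H'" by (auto simp: dvd_def)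
    have "H' \<noteq> 0" using less.prems(1) H' by auto
    have dl: "degree ([:-z,1:]^2) = 2" using degree_linear_power[of "-z" 2] by simp
    have deg: "degree H = 2 + degree H'" using H' \<open>H' \<noteq> 0\<close> dl
      by (simp add: degree_mult_eq)
    have "\<forall>z'>0. poly H' z' = 0 \<longrightarrow> even (order z' H')"
    proof (intro allI impI)
      fix z' :: real assume z': "z' > 0" "poly H' z' = 0"
      have "poly H z' = 0" using H' z' by simp
      hence ev: "even (order z' H)" using less.prems(2) z' by blast
      have "order z' H = order z' ([:-z,1:]^2) + order z' H'"
        using H' less.prems(1) by (simp add: order_mult)
      moreover have "order z' ([:-z,1:]^2) = 2 \<or> order z' ([:-z,1:]^2) = 0"
      proof (cases "z' = z")
        case True thus ?thesis using order_power_n_n[of z 2] by simp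
      next
        case False thus ?thesis by (intro disjI2 order_0I) simp
      qed
      ultimately show "even (order z' H')" using ev by auto
    qed
    hence IH: "(\<forall>x>0. poly H' x \<ge> 0) \<or> (\<forall>x>0. poly H' x \<le> 0)"
      using less.hyps[of H'] deg \<open>H' \<noteq> 0\<close> by auto
    have eqH: "\<And>x. poly H x = (x - z)\<^sup>2 * poly H' x" using H' by simp
    show ?thesis
      using IH unfolding eqH by (auto intro: mult_nonneg_nonneg mult_nonneg_nonpos)
  qed
qed

lemma order_prod_linear:
  fixes Z :: "real set"
  assumes "finite Z"
  shows "order x (\<Prod>z\<in>Z. [:-z,1:]) = (if x \<in> Z then 1 else 0)"
  using assms
proof (induction Z rule: finite_induct)
  case empty
  show ?case by (simp add: order_0I)
next
  case (insert a F)
  have nz: "(\<Prod>z\<in>F. [:-z,1:]) \<noteq> (0::real poly)" by (simp add: prod_zero_iff[OF insert(1)])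
  have eq: "(\<Prod>z\<in>insert a F. [:-z,1:]) = [:-a,1:] * (\<Prod>z\<in>F. [:-z,1:])"
    by (rule prod.insert[OF insert(1,2)])
  have nz2: "[:-a,1:] * (\<Prod>z\<in>F. [:-z,1:]) \<noteq> (0::real poly)"
    using nz by (metis mult_eq_0_iff pCons_eq_0_iff one_neq_zero)
  have "order x (\<Prod>z\<in>insert a F. [:-z,1:]) = order x [:-a,1:] + order x (\<Prod>z\<in>F. [:-z,1:])"
    unfolding eq by (rule order_mult[OF nz2])
  moreover have "order x [:-a,1:] = (if x = a then 1 else 0)"
  proof (cases "x = a")
    case True thus ?thesis using order_power_n_n[of a 1] by simp
  next
    case False thus ?thesis by (simp add: order_0I)
  qed
  ultimately show ?case using insert by auto
qed

lemma div_roots: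
  fixes P :: "real poly"
  assumes "finite Z" "\<forall>z\<in>Z. poly P z = 0"
  shows "\<exists>L. P = (\<Prod>z\<in>Z. [:-z,1:]) * L"
  using assms
proof (induction Z rule: finite_induct)
  case empty thus ?case by simp
next
  case (insert a F)
  then obtain L where L: "P = (\<Prod>z\<in>F. [:-z,1:]) * L" by auto
  have "poly (\<Prod>z\<in>F. [:-z,1:]) a \<noteq> 0"
    using insert(2) by (auto simp: poly_prod prod_zero_iff[OF insert(1)])
  moreover have "poly P a = 0" using insert by auto
  ultimately have "poly L a = 0" using L by simp
  then obtain L' where "L = [:-a,1:] * L'" using poly_eq_0_iff_dvd by (auto simp: dvd_def)
  moreover have "(\<Prod>z\<in>insert a F. [:-z,1:]) = [:-a,1:] * (\<Prod>z\<in>F. [:-z,1:])"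
    by (rule prod.insert[OF insert(1,2)])
  ultimately have "P = (\<Prod>z\<in>insert a F. [:-z,1:]) * L'" using L by (metis mult.assoc mult.commute)
  thus ?case by blast
qed

context cgsetup
begin

lemma sign_changes:
  fixes P :: "real poly"
  assumes P0: "poly P 0 \<noteq> 0" and rm: "r \<le> m"
    and orthP: "\<forall>Q. degree Q \<le> r \<and> poly Q 0 = 0 \<longrightarrow> ip P Q = 0"
  shows "r \<le> card {z. z > 0 \<and> poly P z = 0}"
proof (rule ccontr)
  assume contra: "\<not> r \<le> card {z. z > 0 \<and> poly P z = 0}"
  have "P \<noteq> 0" using P0 by auto
  have finR: "finite {z. z > 0 \<and> poly P z = 0}"
    using poly_roots_finite[OF \<open>P \<noteq> 0\<close>] by (rule finite_subset[rotated]) auto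
  define Z where "Z = {z. z > 0 \<and> odd (order z P)}"
  have ZR: "Z \<subseteq> {z. z > 0 \<and> poly P z = 0}"
    unfolding Z_def using order_root[of P] by (auto dest: odd_pos)
  have finZ: "finite Z" using finite_subset[OF ZR finR] .
  have cardZ: "card Z < r" using card_mono[OF finR ZR] contra by simp
  define Q0 where "Q0 = (\<Prod>z\<in>Z. [:-z,1::real:])"
  have Q0nz: "Q0 \<noteq> 0" unfolding Q0_def by (simp add: prod_zero_iff[OF finZ])
  have dQ0: "degree Q0 = card Z" unfolding Q0_def
    by (subst degree_prod_eq_sum_degree) auto
  have "degree (pCons 0 Q0) \<le> r" using degree_pCons_eq[OF Q0nz] dQ0 cardZ by simp
  hence "ip P (pCons 0 Q0) = 0" using orthP by simp
  hence sum0: "(\<Sum>i\<in>UNIV. w i * mu i * poly (P * Q0) (mu i)) = 0"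
    unfolding ipw_def by (simp add: algebra_simps)
  define H where "H = P * Q0"
  have Hnz: "H \<noteq> 0" unfolding H_def using \<open>P \<noteq> 0\<close> Q0nz by simp
  have "\<forall>z>0. poly H z = 0 \<longrightarrow> even (order z H)"
  proof (intro allI impI)
    fix z :: real assume "z > 0" "poly H z = 0"
    have "order z H = order z P + order z Q0" unfolding H_def using Hnz H_def by (simp add: order_mult)
    also have "order z Q0 = (if z \<in> Z then 1 else 0)" unfolding Q0_def by (rule order_prod_linear[OF finZ])
    finally show "even (order z H)" using \<open>z > 0\<close> unfolding Z_def by auto
  qed
  from even_roots_const_sign[OF Hnz this]
  have allz: "\<forall>i. w i * mu i * poly H (mu i) = 0"
  proof
    assume pos: "\<forall>x>0. poly H x \<ge> 0"
    have "\<forall>i\<in>UNIV. w i * mu i * poly H (mu i) = 0"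
      using sum0 unfolding H_def[symmetric]
      by (subst sum_nonneg_eq_0_iff[symmetric]) (auto intro!: mult_nonneg_nonneg w_nn less_imp_le[OF mu_pos] pos[rule_format] mu_pos)
    thus ?thesis by blast
  next
    assume neg: "\<forall>x>0. poly H x \<le> 0"
    have "(\<Sum>i\<in>UNIV. - (w i * mu i * poly H (mu i))) = 0"
      using sum0 unfolding H_def[symmetric] by (simp add: sum_negf)
    moreover have "\<And>i. 0 \<le> - (w i * mu i * poly H (mu i))"
    proof -
      fix i have "poly H (mu i) \<le> 0" using neg mu_pos by blast
      moreover have "w i * mu i \<ge> 0" using w_nn[of i] mu_pos[of i] by simp
      ultimately show "0 \<le> - (w i * mu i * poly H (mu i))" by (simp add: mult_nonneg_nonpos)
    qed
    ultimately have "\<forall>i\<in>UNIV. - (w i * mu i * poly H (mu i)) = 0"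
      by (subst sum_nonneg_eq_0_iff[symmetric]) auto
    thus ?thesis by auto
  qed
  have van: "\<And>i. poly P (mu i) = 0"
  proof -
    fix i
    obtain j where j: "mu j = mu i" "w j > 0" using w_cover by blast
    have "poly H (mu i) = 0" using allz[rule_format, of j] j mu_pos[of j] by simp
    hence "poly P (mu i) = 0 \<or> poly Q0 (mu i) = 0" unfolding H_def by simp
    thus "poly P (mu i) = 0"
    proof
      assume "poly Q0 (mu i) = 0"
      hence "mu i \<in> Z" unfolding Q0_def by (auto simp: poly_prod prod_zero_iff[OF finZ])
      thus ?thesis using ZR by auto
    qed
  qed
  have "range mu \<subseteq> {z. z > 0 \<and> poly P z = 0}" using van mu_pos by auto
  hence "m \<le> card {z. z > 0 \<and> poly P z = 0}" by (rule card_mono[OF finR])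
  thus False using contra rm by simp
qed

end

definition pl :: "real list \<Rightarrow> real poly" where
  "pl zs = prod_list (map (\<lambda>z. [:1, -1/z:]) zs)"

lemma poly_pl: "poly (pl zs) x = prod_list (map (\<lambda>z. 1 - x / z) zs)"
  unfolding pl_def by (induction zs) (auto simp: algebra_simps)

lemma factor_roots:
  fixes P :: "real poly"
  assumes dP: "degree P = Suc r" and P0: "poly P 0 = 1"
    and cr: "r \<le> card {z. z > 0 \<and> poly P z = 0}"
    and lc: "(-1)^(Suc r) * lead_coeff P > 0"
  shows "\<exists>zs. length zs = Suc r \<and> (\<forall>z\<in>set zs. z > 0) \<and>
            P = prod_list (map (\<lambda>z. [:1, -1/z:]) zs)"
proof -
  have "P \<noteq> 0" using P0 by auto
  have finR: "finite {z. z > 0 \<and> poly P z = 0}"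
    using poly_roots_finite[OF \<open>P \<noteq> 0\<close>] by (rule finite_subset[rotated]) auto
  obtain Z where Z: "Z \<subseteq> {z. z > 0 \<and> poly P z = 0}" "card Z = r" "finite Z"
    using obtain_subset_with_card_n[OF cr] by blast
  obtain L where L: "P = (\<Prod>z\<in>Z. [:-z,1:]) * L" using div_roots[OF Z(3)] Z(1) by blast
  define QZ where "QZ = (\<Prod>z\<in>Z. [:-z,1::real:])"
  have QZnz: "QZ \<noteq> 0" unfolding QZ_def by (simp add: prod_zero_iff[OF Z(3)])
  have dQ: "degree QZ = r" unfolding QZ_def using Z(2)
    by (subst degree_prod_eq_sum_degree) auto
  have lQ: "lead_coeff QZ = 1" unfolding QZ_def by (simp add: lead_coeff_prod)
  have "L \<noteq> 0" using L \<open>P \<noteq> 0\<close> by auto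
  have dL: "degree L = 1" using L dP dQ QZnz \<open>L \<noteq> 0\<close> unfolding QZ_def[symmetric]
    by (simp add: degree_mult_eq)
  define a where "a = coeff L 0"
  define b where "b = coeff L 1"
  have Lab: "L = [:a, b:]"
    unfolding a_def b_def
  proof (rule poly_eqI)
    fix n show "coeff L n = coeff [:coeff L 0, coeff L 1:] n"
      using dL by (cases n; cases "n - 1") (auto simp: coeff_eq_0)
  qed
  have "lead_coeff P = lead_coeff QZ * lead_coeff L" using L unfolding QZ_def by (simp only: lead_coeff_mult)
  hence lcP: "lead_coeff P = b" using lQ dL unfolding b_def by simp
  have prodneg: "poly QZ 0 = (-1)^r * (\<Prod>z\<in>Z. z)"
  proof -
    have "poly QZ 0 = (\<Prod>z\<in>Z. (-1) * z)" unfolding QZ_def by (simp add: poly_prod)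
    also have "\<dots> = (\<Prod>z\<in>Z. (-1::real)) * (\<Prod>z\<in>Z. z)" by (rule prod.distrib)
    finally show ?thesis using Z(2) by simp
  qed
  have pz: "(\<Prod>z\<in>Z. z) > 0" using Z(1) by (intro prod_pos) auto
  have a1: "poly QZ 0 * a = 1" using P0 L Lab unfolding QZ_def[symmetric] by (simp add: mult.commute)
  have sa: "(-1)^r * a > 0"
  proof -
    have "((-1)^r * a) * (\<Prod>z\<in>Z. z) = 1" using a1 prodneg by (simp add: algebra_simps)
    thus ?thesis using pz by (metis zero_less_mult_pos2 zero_less_one)
  qed
  have sb: "(-1)^(Suc r) * b > 0" using lc lcP by simp
  have "a * b < 0"
  proof -
    have sb': "(-1)^r * b < 0" using sb by simp
    have "((-1)^r * a) * ((-1)^r * b) < 0" using sa sb' by (rule mult_pos_neg)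
    moreover have "((-1)^r * a) * ((-1)^r * b) = ((-1)^r * (-1)^r) * (a * b)" by (simp add: algebra_simps)
    moreover have "((-1::real)^r * (-1)^r) = 1" by (simp flip: power_add)
    ultimately show ?thesis by simp
  qed
  define z0 where "z0 = - a / b"
  have "a \<noteq> 0" "b \<noteq> 0" using \<open>a * b < 0\<close> by auto
  have z0pos: "z0 > 0" unfolding z0_def using \<open>a * b < 0\<close>
    by (simp add: divide_less_0_iff zero_less_divide_iff mult_less_0_iff)
  define zs where "zs = z0 # sorted_list_of_set Z"
  have "P = prod_list (map (\<lambda>z. [:1, -1/z:]) zs)"
  proof (rule poly_ext)
    fix x
    have "poly P x = (\<Prod>z\<in>Z. x - z) * (a + b * x)" using L Lab by (simp add: poly_prod algebra_simps)
    also have "(\<Prod>z\<in>Z. x - z) = (\<Prod>z\<in>Z. (-z) * (1 - x / z))"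
      by (rule prod.cong) (use Z(1) in \<open>auto simp: field_simps\<close>)
    also have "\<dots> = poly QZ 0 * (\<Prod>z\<in>Z. (1 - x / z))"
      unfolding QZ_def poly_prod by (simp add: prod.distrib[symmetric])
    also have "a + b * x = a * (1 - x / z0)" unfolding z0_def using \<open>a \<noteq> 0\<close> \<open>b \<noteq> 0\<close>
      by (simp add: field_simps)
    finally have "poly P x = (poly QZ 0 * a) * ((1 - x / z0) * (\<Prod>z\<in>Z. (1 - x / z)))"
      by (simp add: algebra_simps)
    also have "\<dots> = (1 - x / z0) * (\<Prod>z\<in>Z. (1 - x / z))" using a1 by simp
    also have "(\<Prod>z\<in>Z. (1 - x / z)) = prod_list (map (\<lambda>z. 1 - x / z) (sorted_list_of_set Z))"
      using Z(3) by (simp add: prod.distinct_set_conv_list[symmetric])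
    finally show "poly P x = poly (prod_list (map (\<lambda>z. [:1, -1/z:]) zs)) x"
      using poly_pl[of zs x] unfolding zs_def pl_def by simp
  qed
  moreover have "length zs = Suc r" unfolding zs_def using Z by simp
  moreover have "\<forall>z\<in>set zs. z > 0" unfolding zs_def using Z z0pos by auto
  ultimately show ?thesis by blast
qed

lemma pl_Cons: "pl (z # zs) = [:1, -1/z:] * pl zs" unfolding pl_def by simp

lemma degree_pl: "degree (pl zs) \<le> length zs"
proof (induction zs)
  case Nil thus ?case by (simp add: pl_def)
next
  case (Cons z zs)
  have "degree (pl (z # zs)) \<le> degree [:1, -1/z:] + degree (pl zs)"
    unfolding pl_Cons by (rule degree_mult_le)
  also have "\<dots> \<le> 1 + length zs" using Cons by (intro add_mono) auto
  finally show ?case by simp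
qed

lemma pl_0: "poly (pl zs) 0 = 1" by (induction zs) (simp_all add: pl_def)

lemma pderiv_pl: "poly (pderiv (pl zs)) 0 = - sum_list (map (\<lambda>z. 1/z) zs)"
proof (induction zs)
  case Nil thus ?case by (simp add: pl_def)
next
  case (Cons z zs)
  show ?case unfolding pl_Cons pderiv_mult using Cons pl_0[of zs]
    by (simp add: pderiv_pCons)
qed

lemma pl_remove1: "x \<in> set zs \<Longrightarrow> pl zs = [:1, -1/x:] * pl (remove1 x zs)"
proof (induction zs)
  case Nil thus ?case by simp
next
  case (Cons z zs)
  show ?case
  proof (cases "z = x")
    case True thus ?thesis by (simp add: pl_Cons)
  next
    case False
    hence "x \<in> set zs" using Cons by simp
    have "pl (z # zs) = [:1, -1/z:] * ([:1, -1/x:] * pl (remove1 x zs))"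
      unfolding pl_Cons using Cons.IH[OF \<open>x \<in> set zs\<close>] by simp
    also have "\<dots> = [:1, -1/x:] * pl (z # remove1 x zs)"
      unfolding pl_Cons by (rule mult.left_commute)
    finally show ?thesis using False by simp
  qed
qed

lemma prod_bounds:
  fixes x :: real
  assumes "0 \<le> x" "\<forall>z\<in>set zs. z > 0 \<and> x \<le> z"
  shows "0 \<le> prod_list (map (\<lambda>z. 1 - x / z) zs)"
    and "prod_list (map (\<lambda>z. 1 - x / z) zs) \<le> 1"
    and "prod_list (map (\<lambda>z. 1 - x / z) zs) \<le> exp (- (x * sum_list (map (\<lambda>z. 1/z) zs)))"
    and "1 - x * sum_list (map (\<lambda>z. 1/z) zs) \<le> prod_list (map (\<lambda>z. 1 - x / z) zs)"
proof -
  have "0 \<le> prod_list (map (\<lambda>z. 1 - x / z) zs) \<and> prod_list (map (\<lambda>z. 1 - x / z) zs) \<le> 1 \<and>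
        prod_list (map (\<lambda>z. 1 - x / z) zs) \<le> exp (- (x * sum_list (map (\<lambda>z. 1/z) zs))) \<and>
        1 - x * sum_list (map (\<lambda>z. 1/z) zs) \<le> prod_list (map (\<lambda>z. 1 - x / z) zs) \<and>
        0 \<le> sum_list (map (\<lambda>z. 1/z) zs)"
    using assms(2)
  proof (induction zs)
    case Nil thus ?case by simp
  next
    case (Cons z zs)
    define p where "p = prod_list (map (\<lambda>z. 1 - x / z) zs)"
    define s where "s = sum_list (map (\<lambda>z. 1/z) zs)"
    have IH: "0 \<le> p" "p \<le> 1" "p \<le> exp (- (x * s))" "1 - x * s \<le> p" "0 \<le> s"
      using Cons unfolding p_def s_def by auto
    have z: "z > 0" "x \<le> z" using Cons.prems by auto
    have f0: "0 \<le> 1 - x / z" using z by (simp add: field_simps)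
    have f1: "1 - x / z \<le> 1" using z assms(1) by simp
    have fe: "1 - x / z \<le> exp (- (x / z))" using exp_ge_add_one_self[of "- (x / z)"] by simp
    have xz: "0 \<le> x / z" using z assms(1) by simp
    have "(1 - x / z) * p \<le> exp (- (x / z)) * exp (- (x * s))"
      by (rule mult_mono[OF fe IH(3)]) (use IH f0 in auto)
    also have "\<dots> = exp (- (x * (1 / z + s)))" by (simp add: exp_add[symmetric] algebra_simps)
    finally have c3: "(1 - x / z) * p \<le> exp (- (x * (1 / z + s)))" .
    have "(1 - x / z) * (1 - x * s) \<le> (1 - x / z) * p" by (rule mult_left_mono[OF IH(4) f0])
    moreover have "(1 - x / z) * (1 - x * s) = 1 - x * (1/z + s) + (x / z) * (x * s)"
      by (simp add: algebra_simps)
    moreover have "(x / z) * (x * s) \<ge> 0" using xz IH(5) assms(1) by (intro mult_nonneg_nonneg) auto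
    ultimately have c4: "1 - x * (1 / z + s) \<le> (1 - x / z) * p" by linarith
    have c1: "0 \<le> (1 - x / z) * p" using f0 IH(1) by simp
    have c2: "(1 - x / z) * p \<le> 1" using f0 f1 IH(1,2) by (simp add: mult_le_one)
    have c5: "0 \<le> 1 / z + s" using z IH(5) by simp
    show ?case using c1 c2 c3 c4 c5 unfolding p_def s_def by simp
  qed
  thus "0 \<le> prod_list (map (\<lambda>z. 1 - x / z) zs)"
    and "prod_list (map (\<lambda>z. 1 - x / z) zs) \<le> 1"
    and "prod_list (map (\<lambda>z. 1 - x / z) zs) \<le> exp (- (x * sum_list (map (\<lambda>z. 1/z) zs)))"
    and "1 - x * sum_list (map (\<lambda>z. 1/z) zs) \<le> prod_list (map (\<lambda>z. 1 - x / z) zs)" by auto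
qed

lemma per_i:
  fixes x1 rho mu phi Y E :: real
  assumes x1: "x1 > 0" and mu: "mu > 0" and rho: "rho * x1 \<ge> 1"
    and lt: "mu < x1 \<Longrightarrow> 0 \<le> phi \<and> phi \<le> 1 \<and> (1 - mu/x1) * phi \<le> exp (- (rho * mu))
              \<and> 1 - rho * mu \<le> (1 - mu/x1) * phi"
  shows "(E - (1 - mu/x1) * phi * Y)\<^sup>2 + (2/x1) * ((Y\<^sup>2) * mu * phi * ((1 - mu/x1) * phi))
     \<le> 2 * (exp (- (rho * mu)) * (Y - E)\<^sup>2) + 2 * (min (rho * mu) 1 * (E\<^sup>2))"
proof -
  define u where "u = mu / x1"
  define R where "R = (1 - u) * phi"
  have rho0: "rho > 0" using rho x1 by (metis mult_pos_pos not_less order_le_less_trans zero_less_one mult_nonpos_nonneg less_imp_le)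
  have t2: "(2/x1) * ((Y\<^sup>2) * mu * phi * ((1 - mu/x1) * phi)) = 2 * u * phi * R * Y\<^sup>2"
    unfolding u_def R_def using x1 by (simp add: field_simps power2_eq_square)
  have ee: "exp (- (rho * mu)) > 0" by simp
  show ?thesis
  proof (cases "mu < x1")
    case False
    hence u1: "u \<ge> 1" unfolding u_def using x1 by (simp add: field_simps)
    have "rho * mu \<ge> 1"
    proof -
      have "rho * mu \<ge> rho * x1" using False rho0 by (simp add: mult_left_mono)
      thus ?thesis using rho by linarith
    qed
    hence mn: "min (rho * mu) 1 = 1" by simp
    have "2 * E\<^sup>2 + 2 * (R * Y)\<^sup>2 - (E - R * Y)\<^sup>2 = (E + R * Y)\<^sup>2"
      by (simp add: power2_eq_square algebra_simps)
    hence b1: "(E - R * Y)\<^sup>2 \<le> 2 * E\<^sup>2 + 2 * (R * Y)\<^sup>2"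
      using zero_le_power2[of "E + R * Y"] by linarith
    have "(1 - u)\<^sup>2 \<le> u * (u - 1)" using u1 by (simp add: power2_eq_square algebra_simps)
    hence "(1 - u)\<^sup>2 * (phi\<^sup>2 * Y\<^sup>2) \<le> u * (u - 1) * (phi\<^sup>2 * Y\<^sup>2)"
      by (rule mult_right_mono) simp
    hence b2: "(R * Y)\<^sup>2 \<le> u * (u - 1) * (phi\<^sup>2 * Y\<^sup>2)"
      unfolding R_def by (simp add: power_mult_distrib)
    have b3: "2 * u * phi * R * Y\<^sup>2 = - 2 * (u * (u - 1) * (phi\<^sup>2 * Y\<^sup>2))"
      unfolding R_def by (simp add: power2_eq_square algebra_simps)
    have b4: "0 \<le> 2 * (exp (- (rho * mu)) * (Y - E)\<^sup>2)" by simp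
    have "(E - (1 - mu/x1) * phi * Y)\<^sup>2 = (E - R * Y)\<^sup>2" unfolding R_def u_def by simp
    thus ?thesis unfolding t2 mn using b1 b2 b3 b4 by linarith
  next
    case True
    from lt[OF True] have h: "0 \<le> phi" "phi \<le> 1" "R \<le> exp (- (rho * mu))" "1 - rho * mu \<le> R"
      unfolding R_def u_def by auto
    have u: "0 < u" "u < 1" unfolding u_def using True x1 mu by (auto simp: field_simps)
    have R0: "0 \<le> R" unfolding R_def using h u by simp
    have R1: "R \<le> 1" unfolding R_def using h u by (simp add: mult_le_one)
    have "u * phi \<le> 1 - R" unfolding R_def using h by (simp add: algebra_simps)
    hence c1: "2 * u * phi * R * Y\<^sup>2 \<le> 2 * (1 - R) * R * Y\<^sup>2"
    proof -
      assume a: "u * phi \<le> 1 - R"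
      have "(u * phi) * (2 * R * Y\<^sup>2) \<le> (1 - R) * (2 * R * Y\<^sup>2)"
        by (rule mult_right_mono[OF a]) (use R0 in simp)
      thus ?thesis by (simp add: algebra_simps)
    qed
    have c2: "(E - R * Y)\<^sup>2 + 2 * (1 - R) * R * Y\<^sup>2 =
        2 * (R * (Y - E)\<^sup>2) + 2 * ((1 - R) * E\<^sup>2) - (R * (Y - E) - (1 - R) * E)\<^sup>2"
      by (simp add: power2_eq_square algebra_simps)
    have c3: "2 * (R * (Y - E)\<^sup>2) \<le> 2 * (exp (- (rho * mu)) * (Y - E)\<^sup>2)"
      using mult_right_mono[OF h(3), of "(Y - E)\<^sup>2"] by simp
    have "1 - R \<le> min (rho * mu) 1" using h(4) R0 by simp
    hence c4: "2 * ((1 - R) * E\<^sup>2) \<le> 2 * (min (rho * mu) 1 * E\<^sup>2)"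
      using mult_right_mono[of "1 - R" "min (rho * mu) 1" "E\<^sup>2"] by simp
    have "(E - (1 - mu/x1) * phi * Y)\<^sup>2 = (E - R * Y)\<^sup>2" unfolding R_def u_def by simp
    thus ?thesis unfolding t2 using c1 c2 c3 c4 zero_le_power2[of "R * (Y - E) - (1 - R) * E"] by linarith
  qed
qed

definition cgi :: "('i::finite \<Rightarrow> real) \<Rightarrow> ('i \<Rightarrow> real) \<Rightarrow> real \<Rightarrow> real poly" where
  "cgi w mu t = (if t \<le> 0 then cgw w mu 0
      else (let k = nat (\<lceil>t\<rceil> - 1); \<alpha> = t - real k in
            smult (1 - \<alpha>) (cgw w mu k) + smult \<alpha> (cgw w mu (Suc k))))"

context cgsetup
begin

lemma interp_structure:
  assumes t: "0 < t" "t \<le> real m"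
  shows "\<exists>x1 phi. x1 > 0 \<and> cgi w mu t = [:1, -1/x1:] * phi \<and>
           \<bar>poly (pderiv (cgi w mu t)) 0\<bar> * x1 \<ge> 1 \<and>
           ip (cgi w mu t) (pCons 0 phi) \<ge> 0 \<and>
           (\<forall>x. 0 < x \<and> x < x1 \<longrightarrow> 0 \<le> poly phi x \<and> poly phi x \<le> 1 \<and>
               poly (cgi w mu t) x \<le> exp (- (\<bar>poly (pderiv (cgi w mu t)) 0\<bar> * x)) \<and>
               1 - \<bar>poly (pderiv (cgi w mu t)) 0\<bar> * x \<le> poly (cgi w mu t) x)"
proof -
  define k where "k = nat (\<lceil>t\<rceil> - 1)"
  define \<alpha> where "\<alpha> = t - real k"
  have ct: "\<lceil>t\<rceil> \<ge> 1" using t by simp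
  have rk: "real k = real_of_int \<lceil>t\<rceil> - 1" unfolding k_def using ct by simp
  have a0: "0 < \<alpha>" unfolding \<alpha>_def rk using ceiling_less_cancel[of t] 
    by (smt (verit, best) ceiling_correct)
  have a1: "\<alpha> \<le> 1" unfolding \<alpha>_def rk using le_of_int_ceiling[of t] by simp
  have "\<lceil>t\<rceil> \<le> int m" using t(2) by (simp add: ceiling_le_iff)
  hence km: "Suc k \<le> m" unfolding k_def using ct by linarith
  define A where "A = RR k"
  define B where "B = RR (Suc k)"
  define R where "R = smult (1 - \<alpha>) A + smult \<alpha> B"
  have Rdef: "cgi w mu t = R" unfolding cgi_def R_def A_def B_def k_def[symmetric] \<alpha>_def[symmetric] Let_def
    using t by simp
  have fA: "feas k A" unfolding A_def using cgw_props(1)[of k] km by simp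
  have fB: "feas (Suc k) B" unfolding B_def using cgw_props(1)[of "Suc k"] km by simp
  have R0: "poly R 0 = 1" using fA fB unfolding R_def feas_def by (simp add: algebra_simps)
  have orthR: "\<forall>Q. degree Q \<le> k \<and> poly Q 0 = 0 \<longrightarrow> ip R Q = 0"
  proof (intro allI impI)
    fix Q :: "real poly" assume Q: "degree Q \<le> k \<and> poly Q 0 = 0"
    have "ip A Q = 0" unfolding A_def using Q km by (intro orth) auto
    moreover have "ip B Q = 0" unfolding B_def using Q km by (intro orth) auto
    ultimately show "ip R Q = 0" unfolding R_def by (simp add: ipw_add1 ipw_smult1)
  qed
  have cA: "coeff A (Suc k) = 0" using fA unfolding feas_def by (intro coeff_eq_0) auto
  have coR: "coeff R (Suc k) = \<alpha> * cc (Suc k)" unfolding R_def cc_def B_def[symmetric] using cA by simp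
  have ccs: "(-1)^(Suc k) * cc (Suc k) > 0" using cc_sign[OF km] .
  hence "cc (Suc k) \<noteq> 0" by auto
  hence coRnz: "coeff R (Suc k) \<noteq> 0" using coR a0 by simp
  have "degree R \<le> Suc k" unfolding R_def using fA fB unfolding feas_def
    by (intro degree_add_le order.trans[OF degree_smult_le]) auto
  moreover have "Suc k \<le> degree R" using coRnz by (rule le_degree)
  ultimately have dR: "degree R = Suc k" by simp
  have lcR: "(-1)^(Suc k) * lead_coeff R > 0"
    unfolding dR coR using ccs a0 by (simp add: mult.left_commute mult_pos_neg)
  have "k \<le> card {z. z > 0 \<and> poly R z = 0}"
    by (rule sign_changes) (use R0 km orthR in auto)
  then obtain zs where zs: "length zs = Suc k" "\<forall>z\<in>set zs. z > 0" "R = pl zs"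
    using factor_roots[OF dR R0 _ lcR] unfolding pl_def by blast
  define x1 where "x1 = Min (set zs)"
  have "set zs \<noteq> {}" using zs(1) by auto
  hence x1in: "x1 \<in> set zs" unfolding x1_def by (intro Min_in) auto
  have x1le: "\<forall>z\<in>set zs. x1 \<le> z" unfolding x1_def by simp
  have x1pos: "x1 > 0" using x1in zs(2) by auto
  define phi where "phi = pl (remove1 x1 zs)"
  have Rphi: "R = [:1, -1/x1:] * phi" unfolding phi_def zs(3) by (rule pl_remove1[OF x1in])
  define s where "s = sum_list (map (\<lambda>z. 1/z) zs)"
  have rho: "\<bar>poly (pderiv R) 0\<bar> = s" unfolding zs(3) pderiv_pl s_def
  proof -
    have "0 \<le> sum_list (map (\<lambda>z. 1/z) zs)" using zs(2) by (intro sum_list_nonneg) auto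
    thus "\<bar>- sum_list (map (\<lambda>z. 1/z) zs)\<bar> = sum_list (map (\<lambda>z. 1/z) zs)" by simp
  qed
  have s_split: "s = 1/x1 + sum_list (map (\<lambda>z. 1/z) (remove1 x1 zs))"
    unfolding s_def by (rule sum_list_map_remove1[OF x1in])
  have "0 \<le> sum_list (map (\<lambda>z. 1/z) (remove1 x1 zs))"
    using zs(2) set_remove1_subset[of x1 zs] by (intro sum_list_nonneg) fastforce
  hence "s \<ge> 1/x1" using s_split by simp
  hence sx1: "s * x1 \<ge> 1" using x1pos by (simp add: field_simps)
  have dphi: "degree phi \<le> k" unfolding phi_def using degree_pl[of "remove1 x1 zs"] zs(1) x1in
    by (simp add: length_remove1)
  have iB: "ip B (pCons 0 phi) = 0" unfolding B_def
    by (rule orth) (use km dphi in \<open>auto intro: order.trans[OF degree_pCons_le]\<close>)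
  define Qp :: "real poly" where "Qp = pCons 0 (phi - smult (coeff phi k) (monom 1 k))"
  have "degree Qp \<le> k"
    unfolding Qp_def
  proof (rule degree_le, intro allI impI)
    fix i assume "k < i"
    then obtain j where j: "i = Suc j" "k \<le> j" by (cases i) auto
    have "coeff phi j = (if j = k then coeff phi k else 0)"
      using j dphi by (auto intro: coeff_eq_0)
    thus "coeff (pCons 0 (phi - smult (coeff phi k) (monom 1 k))) i = 0"
      using j by (auto simp: coeff_monom)
  qed
  moreover have "poly Qp 0 = 0" unfolding Qp_def by simp
  ultimately have "ip A Qp = 0" unfolding A_def using km by (intro orth) auto
  moreover have "Qp = pCons 0 phi - smult (coeff phi k) (monom 1 (Suc k))"
    unfolding Qp_def by (simp add: monom_Suc)
  ultimately have iA: "ip A (pCons 0 phi) = coeff phi k * TT k"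
    unfolding TT_def A_def by (simp add: ipw_diff2 ipw_smult2)
  have "coeff R (Suc k) = coeff phi (Suc k) - (1/x1) * coeff phi k"
    unfolding Rphi by simp
  moreover have "coeff phi (Suc k) = 0" using dphi by (intro coeff_eq_0) auto
  ultimately have "coeff phi k = - x1 * (\<alpha> * cc (Suc k))" using coR x1pos by (simp add: field_simps)
  hence "ip R (pCons 0 phi) = (1 - \<alpha>) * \<alpha> * x1 * (- cc (Suc k) * TT k)"
    unfolding R_def using iA iB by (simp add: ipw_add1 ipw_smult1 algebra_simps)
  moreover have "- cc (Suc k) * TT k > 0" using decrease[OF km] by simp
  moreover have "(1 - \<alpha>) * \<alpha> * x1 \<ge> 0" using a0 a1 x1pos by simp
  ultimately have key: "ip R (pCons 0 phi) \<ge> 0" by (metis mult_nonneg_nonneg less_imp_le)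
  have bounds: "\<forall>x. 0 < x \<and> x < x1 \<longrightarrow> 0 \<le> poly phi x \<and> poly phi x \<le> 1 \<and>
               poly R x \<le> exp (- (s * x)) \<and> 1 - s * x \<le> poly R x"
  proof (intro allI impI)
    fix x assume x: "0 < x \<and> x < x1"
    have hz: "\<forall>z\<in>set zs. z > 0 \<and> x \<le> z" using zs(2) x1le x by force
    have hz': "\<forall>z\<in>set (remove1 x1 zs). z > 0 \<and> x \<le> z" using hz set_remove1_subset[of x1 zs] by blast
    show "0 \<le> poly phi x \<and> poly phi x \<le> 1 \<and> poly R x \<le> exp (- (s * x)) \<and> 1 - s * x \<le> poly R x"
      using prod_bounds[of x zs, OF _ hz] prod_bounds[of x "remove1 x1 zs", OF _ hz'] x
      unfolding phi_def zs(3) poly_pl s_def by (simp add: mult.commute)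
  qed
  show ?thesis
    unfolding Rdef rho using x1pos Rphi sx1 key bounds by blast
qed

theorem core_ineq:
  fixes Y E :: "'i \<Rightarrow> real"
  assumes wY: "\<And>i. w i = (Y i)\<^sup>2" and t: "0 \<le> t" "t \<le> real m"
  shows "(\<Sum>i\<in>UNIV. (E i - poly (cgi w mu t) (mu i) * Y i)\<^sup>2)
     \<le> 2 * (\<Sum>i\<in>UNIV. exp (- (\<bar>poly (pderiv (cgi w mu t)) 0\<bar> * mu i)) * (Y i - E i)\<^sup>2)
       + 2 * (\<Sum>i\<in>UNIV. min (\<bar>poly (pderiv (cgi w mu t)) 0\<bar> * mu i) 1 * (E i)\<^sup>2)"
proof (cases "t \<le> 0")
  case True
  hence "cgi w mu t = 1" unfolding cgi_def by (simp add: cgw0)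
  hence "(\<Sum>i\<in>UNIV. (E i - poly (cgi w mu t) (mu i) * Y i)\<^sup>2) \<le>
         2 * (\<Sum>i\<in>UNIV. exp (- (\<bar>poly (pderiv (cgi w mu t)) 0\<bar> * mu i)) * (Y i - E i)\<^sup>2)"
    by (simp add: sum_distrib_left[symmetric] power2_commute[of "E _"] sum_nonneg)
  moreover have "0 \<le> (\<Sum>i\<in>UNIV. min (\<bar>poly (pderiv (cgi w mu t)) 0\<bar> * mu i) 1 * (E i)\<^sup>2)"
    using mu_pos by (intro sum_nonneg mult_nonneg_nonneg) (auto simp: less_imp_le)
  ultimately show ?thesis by linarith
next
  case False
  hence "0 < t" by simp
  obtain x1 phi where st: "x1 > 0" "cgi w mu t = [:1, -1/x1:] * phi"
     "\<bar>poly (pderiv (cgi w mu t)) 0\<bar> * x1 \<ge> 1"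
     "ip (cgi w mu t) (pCons 0 phi) \<ge> 0"
     "\<forall>x. 0 < x \<and> x < x1 \<longrightarrow> 0 \<le> poly phi x \<and> poly phi x \<le> 1 \<and>
               poly (cgi w mu t) x \<le> exp (- (\<bar>poly (pderiv (cgi w mu t)) 0\<bar> * x)) \<and>
               1 - \<bar>poly (pderiv (cgi w mu t)) 0\<bar> * x \<le> poly (cgi w mu t) x"
    using interp_structure[OF \<open>0 < t\<close> t(2)] by blast
  define rho where "rho = \<bar>poly (pderiv (cgi w mu t)) 0\<bar>"
  define R where "R = cgi w mu t"
  have polyR: "\<And>x. poly R x = (1 - x / x1) * poly phi x" unfolding R_def st(2) by (simp add: algebra_simps)
  have per: "\<And>i. (E i - poly R (mu i) * Y i)\<^sup>2 + (2/x1) * ((Y i)\<^sup>2 * mu i * poly phi (mu i) * poly R (mu i))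
     \<le> 2 * (exp (- (rho * mu i)) * (Y i - E i)\<^sup>2) + 2 * (min (rho * mu i) 1 * (E i)\<^sup>2)"
  proof -
    fix i
    have "(E i - (1 - mu i/x1) * poly phi (mu i) * Y i)\<^sup>2 + (2/x1) * (((Y i)\<^sup>2) * mu i * poly phi (mu i) * ((1 - mu i/x1) * poly phi (mu i)))
     \<le> 2 * (exp (- (rho * mu i)) * (Y i - E i)\<^sup>2) + 2 * (min (rho * mu i) 1 * ((E i)\<^sup>2))"
    proof (rule per_i[OF st(1) mu_pos])
      show "1 \<le> rho * x1" using st(3) unfolding rho_def .
      assume "mu i < x1"
      thus "0 \<le> poly phi (mu i) \<and> poly phi (mu i) \<le> 1 \<and> (1 - mu i / x1) * poly phi (mu i) \<le> exp (- (rho * mu i)) \<and>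
            1 - rho * mu i \<le> (1 - mu i / x1) * poly phi (mu i)"
        using st(5) mu_pos[of i] unfolding rho_def R_def[symmetric] polyR by blast
    qed
    thus "?thesis i" unfolding polyR by (simp add: mult.assoc)
  qed
  have "(\<Sum>i\<in>UNIV. (E i - poly R (mu i) * Y i)\<^sup>2) + (2/x1) * ip R (pCons 0 phi)
      = (\<Sum>i\<in>UNIV. (E i - poly R (mu i) * Y i)\<^sup>2 + (2/x1) * ((Y i)\<^sup>2 * mu i * poly phi (mu i) * poly R (mu i)))"
    unfolding ipw_def wY by (simp add: sum.distrib sum_distrib_left algebra_simps)
  also have "\<dots> \<le> (\<Sum>i\<in>UNIV. 2 * (exp (- (rho * mu i)) * (Y i - E i)\<^sup>2) + 2 * (min (rho * mu i) 1 * (E i)\<^sup>2))"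
    by (rule sum_mono) (rule per)
  also have "\<dots> = 2 * (\<Sum>i\<in>UNIV. exp (- (rho * mu i)) * (Y i - E i)\<^sup>2) + 2 * (\<Sum>i\<in>UNIV. min (rho * mu i) 1 * (E i)\<^sup>2)"
    by (simp add: sum.distrib sum_distrib_left)
  finally have "(\<Sum>i\<in>UNIV. (E i - poly R (mu i) * Y i)\<^sup>2) + (2/x1) * ip R (pCons 0 phi) \<le>
     2 * (\<Sum>i\<in>UNIV. exp (- (rho * mu i)) * (Y i - E i)\<^sup>2) + 2 * (\<Sum>i\<in>UNIV. min (rho * mu i) 1 * (E i)\<^sup>2)" .
  moreover have "(2/x1) * ip R (pCons 0 phi) \<ge> 0" using st(1) st(4) unfolding R_def by simp
  ultimately show ?thesis unfolding rho_def R_def by linarith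
qed

end

lemma action:
  fixes v :: "'n::finite \<Rightarrow> real^'n" and c :: "'n \<Rightarrow> real"
  shows "(\<Sum>i\<in>UNIV. c i *\<^sub>R outer (v i)) *v z = (\<Sum>i\<in>UNIV. (c i * (v i \<bullet> z)) *\<^sub>R v i)"
proof -
  have "\<And>a. (\<Sum>b\<in>UNIV. (\<Sum>i\<in>UNIV. c i * (v i $ a * v i $ b)) * z $ b) =
             (\<Sum>i\<in>UNIV. c i * (\<Sum>b\<in>UNIV. v i $ b * z $ b) * v i $ a)"
  proof -
    fix a
    have "(\<Sum>b\<in>UNIV. (\<Sum>i\<in>UNIV. c i * (v i $ a * v i $ b)) * z $ b) =
          (\<Sum>b\<in>UNIV. \<Sum>i\<in>UNIV. c i * (v i $ a * v i $ b) * z $ b)"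
      by (simp add: sum_distrib_right)
    also have "\<dots> = (\<Sum>i\<in>UNIV. \<Sum>b\<in>UNIV. c i * (v i $ a * v i $ b) * z $ b)"
      by (rule sum.swap)
    also have "\<dots> = (\<Sum>i\<in>UNIV. c i * (\<Sum>b\<in>UNIV. v i $ b * z $ b) * v i $ a)"
      by (rule sum.cong) (simp_all add: sum_distrib_left sum_distrib_right mult_ac)
    finally show "?thesis a" .
  qed
  thus ?thesis
    by (simp add: vec_eq_iff matrix_vector_mult_def outer_def inner_vec_def)
qed

locale onb =
  fixes v :: "'n::finite \<Rightarrow> real^'n"
  assumes orth: "\<forall>i j. v i \<bullet> v j = (if i = j then 1 else 0)"
begin

lemma expand: "z = (\<Sum>i\<in>UNIV. (v i \<bullet> z) *\<^sub>R v i)"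
proof -
  define V :: "real^'n^'n" where "V = (\<chi> a b. v b $ a)"
  have "transpose V ** V = mat 1"
    using orth by (simp add: vec_eq_iff matrix_matrix_mult_def transpose_def V_def mat_def inner_vec_def)
  hence VV: "V ** transpose V = mat 1" by (simp add: matrix_left_right_inverse)
  have "z = V *v (transpose V *v z)" by (metis VV matrix_vector_mul_assoc matrix_vector_mul_lid)
  also have "\<dots> = (\<Sum>i\<in>UNIV. (v i \<bullet> z) *\<^sub>R v i)"
    by (simp add: vec_eq_iff matrix_vector_mult_def transpose_def V_def inner_vec_def mult_ac)
  finally show ?thesis .
qed

lemma coord_sum: "v j \<bullet> (\<Sum>i\<in>UNIV. a i *\<^sub>R v i) = a j"
proof -
  have "v j \<bullet> (\<Sum>i\<in>UNIV. a i *\<^sub>R v i) = (\<Sum>i\<in>UNIV. if j = i then a i else 0)"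
    unfolding inner_sum_right inner_scaleR_right using orth by (intro sum.cong) auto
  also have "\<dots> = a j" by simp
  finally show ?thesis .
qed

lemma coord_eq: "(\<And>j. v j \<bullet> x = v j \<bullet> y) \<Longrightarrow> x = y"
  using expand[of x] expand[of y] by simp

lemma norm_coord: "(norm z)\<^sup>2 = (\<Sum>i\<in>UNIV. (v i \<bullet> z)\<^sup>2)"
proof -
  have "(norm z)\<^sup>2 = z \<bullet> z" by (simp add: power2_norm_eq_inner)
  also have "\<dots> = (\<Sum>i\<in>UNIV. (v i \<bullet> z) *\<^sub>R v i) \<bullet> z"
    by (simp only: expand[of z, symmetric])
  also have "\<dots> = (\<Sum>i\<in>UNIV. (v i \<bullet> z)\<^sup>2)"
    by (simp add: inner_sum_left power2_eq_square)
  finally show ?thesis .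
qed

lemma mat_coord: "v j \<bullet> ((\<Sum>i\<in>UNIV. c i *\<^sub>R outer (v i)) *v z) = c j * (v j \<bullet> z)"
  unfolding action by (rule coord_sum)

lemma sum_eig: "(\<Sum>i\<in>UNIV. c i *\<^sub>R outer (v i)) *v v j = c j *\<^sub>R v j"
  by (rule coord_eq) (simp add: mat_coord orth)

lemma eig_to_sum:
  assumes "\<forall>i. A *v v i = mu i *\<^sub>R v i"
  shows "A = (\<Sum>i\<in>UNIV. mu i *\<^sub>R outer (v i))"
proof -
  have "\<And>z. A *v z = (\<Sum>i\<in>UNIV. mu i *\<^sub>R outer (v i)) *v z"
  proof -
    fix z
    have "A *v z = A *v (\<Sum>i\<in>UNIV. (v i \<bullet> z) *\<^sub>R v i)" by (subst expand[of z]) simp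
    also have "\<dots> = (\<Sum>i\<in>UNIV. (v i \<bullet> z) *\<^sub>R (A *v v i))"
      by (simp add: linear_sum[OF matrix_vector_mul_linear] o_def matrix_vector_mult_scaleR)
    also have "\<dots> = (\<Sum>i\<in>UNIV. mu i *\<^sub>R outer (v i)) *v z"
      unfolding action using assms by (simp add: mult.commute)
    finally show "A *v z = (\<Sum>i\<in>UNIV. mu i *\<^sub>R outer (v i)) *v z" .
  qed
  thus ?thesis by (simp add: matrix_eq)
qed

lemma sym_sum: "((\<Sum>i\<in>UNIV. c i *\<^sub>R outer (v i)) *v x) \<bullet> y = x \<bullet> ((\<Sum>i\<in>UNIV. c i *\<^sub>R outer (v i)) *v y)"
  unfolding action by (simp add: inner_sum_left inner_sum_right mult_ac inner_commute)

end

lemma matfun_eq: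
  fixes v :: "'n::finite \<Rightarrow> real^'n"
  assumes orth: "\<forall>i j. v i \<bullet> v j = (if i = j then 1 else 0)"
    and eig: "\<forall>i. A *v v i = mu i *\<^sub>R v i"
  shows "matfun g A = (\<Sum>i\<in>UNIV. g (mu i) *\<^sub>R outer (v i))"
proof -
  interpret onb v using orth by unfold_locales
  have Asum: "A = (\<Sum>i\<in>UNIV. mu i *\<^sub>R outer (v i))" by (rule eig_to_sum[OF eig])
  have ex: "\<exists>B. \<exists>(v'::'n \<Rightarrow> real^'n) (s::'n \<Rightarrow> real).
      (\<forall>i j. v' i \<bullet> v' j = (if i = j then 1 else 0)) \<and>
      (\<forall>i. A *v v' i = s i *\<^sub>R v' i) \<and>
      B = (\<Sum>i\<in>UNIV. g (s i) *\<^sub>R outer (v' i))"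
    using orth eig by blast
  define B where "B = matfun g A"
  have "\<exists>(v'::'n \<Rightarrow> real^'n) (s::'n \<Rightarrow> real).
      (\<forall>i j. v' i \<bullet> v' j = (if i = j then 1 else 0)) \<and>
      (\<forall>i. A *v v' i = s i *\<^sub>R v' i) \<and>
      B = (\<Sum>i\<in>UNIV. g (s i) *\<^sub>R outer (v' i))"
    unfolding B_def matfun_def by (rule someI_ex[OF ex])
  then obtain v' :: "'n \<Rightarrow> real^'n" and s where v':
    "\<forall>i j. v' i \<bullet> v' j = (if i = j then 1 else 0)" "\<forall>i. A *v v' i = s i *\<^sub>R v' i"
    "B = (\<Sum>i\<in>UNIV. g (s i) *\<^sub>R outer (v' i))" by blast
  interpret v': onb v' using v'(1) by unfold_locales
  have "\<forall>j. B *v v j = g (mu j) *\<^sub>R v j"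
  proof
    fix j
    have key: "\<And>i. g (s i) * (v' i \<bullet> v j) = g (mu j) * (v' i \<bullet> v j)"
    proof -
      fix i
      have "s i * (v' i \<bullet> v j) = (A *v v' i) \<bullet> v j" using v'(2) by simp
      also have "\<dots> = v' i \<bullet> (A *v v j)" unfolding Asum by (rule sym_sum)
      also have "\<dots> = mu j * (v' i \<bullet> v j)" using eig by simp
      finally have "(s i - mu j) * (v' i \<bullet> v j) = 0" by (simp add: algebra_simps)
      thus "g (s i) * (v' i \<bullet> v j) = g (mu j) * (v' i \<bullet> v j)" by auto
    qed
    have "B *v v j = (\<Sum>i\<in>UNIV. (g (s i) * (v' i \<bullet> v j)) *\<^sub>R v' i)"
      unfolding v'(3) by (rule action)
    also have "\<dots> = g (mu j) *\<^sub>R (\<Sum>i\<in>UNIV. (v' i \<bullet> v j) *\<^sub>R v' i)"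
      unfolding key by (simp add: scaleR_sum_right)
    also have "\<dots> = g (mu j) *\<^sub>R v j" using v'.expand[of "v j"] by simp
    finally show "B *v v j = g (mu j) *\<^sub>R v j" .
  qed
  hence "B = (\<Sum>i\<in>UNIV. g (mu i) *\<^sub>R outer (v i))" by (rule eig_to_sum)
  thus ?thesis unfolding B_def .
qed

lemma inner_transpose: "(a::real^'p) \<bullet> (transpose (X::real^'p^'n) *v b) = (X *v a) \<bullet> b"
  by (metis dot_lmul_matrix inner_commute transpose_matrix_vector)

lemma inner_transpose': "(a::real^'p) \<bullet> (b v* (X::real^'p^'n)) = (X *v a) \<bullet> b"
  by (metis dot_lmul_matrix inner_commute)

theorem corollary3p4:
  fixes X :: "real^'p^'n" and y eps :: "real^'n" and beta0 :: "real^'p"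
    and v :: "'p \<Rightarrow> real^'p" and s :: "'p \<Rightarrow> real"
    and lam t :: real
  assumes model: "y = X *v beta0 + eps"
    and beta0_row: "beta0 = (pinv X ** X) *v beta0"
    and v_orth: "\<forall>i j. v i \<bullet> v j = (if i = j then 1 else 0)"
    and v_eig: "\<forall>i. Sigma_hat X *v v i = s i *\<^sub>R v i"
    and nondeg: "\<forall>i. (\<Sum>j\<in>{j. s j = s i}. ((transpose X *v y) \<bullet> v j)\<^sup>2) > 0"
    and lam: "lam \<ge> 0"
    and t: "0 \<le> t" "t \<le> real (num_distinct_eigs (Sigma_lam lam X))"
  shows "(norm (matfun sqrt (Sigma_lam lam X) *v (beta_cg lam X y t - beta_lam lam X beta0)))\<^sup>2
    \<le> 2 * (norm (matfun sqrt (Sigma_lam lam X) *v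
               (matfun (\<lambda>x. exp (- rho_cg lam X y t * x / 2)) (Sigma_lam lam X) *v beta_lam lam X beta0)))\<^sup>2
      + 2 * (norm (matfun (\<lambda>x. sqrt (min (rho_cg lam X y t * x) 1)) (Sigma_lam lam X) *v eps_lam lam X eps))\<^sup>2"
proof -
  interpret onb v using v_orth by unfold_locales
  define N where "N = real CARD('n)"
  have N: "N > 0" unfolding N_def by simp
  have SH: "\<And>z. Sigma_hat X *v z = (1/N) *\<^sub>R (transpose X *v (X *v z))"
    unfolding Sigma_hat_def N_def by (simp add: scaleR_matrix_vector_assoc[symmetric] matrix_vector_mul_assoc)
  have s_eq: "\<And>i. s i = (1/N) * ((X *v v i) \<bullet> (X *v v i))"
  proof -
    fix i
    have "s i = v i \<bullet> (Sigma_hat X *v v i)" using v_eig orth by simp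
    also have "\<dots> = (1/N) * ((X *v v i) \<bullet> (X *v v i))" unfolding SH by (simp add: inner_transpose inner_transpose')
    finally show "s i = (1/N) * ((X *v v i) \<bullet> (X *v v i))" .
  qed
  have s_pos: "\<And>i. s i > 0"
  proof (rule ccontr)
    fix i assume "\<not> s i > 0"
    moreover have "s i \<ge> 0" using s_eq N by simp
    ultimately have si: "s i = 0" by simp
    have "\<And>j. j \<in> {j. s j = s i} \<Longrightarrow> ((transpose X *v y) \<bullet> v j)\<^sup>2 = 0"
    proof -
      fix j assume "j \<in> {j. s j = s i}"
      hence "s j = 0" using si by simp
      hence "(X *v v j) \<bullet> (X *v v j) = 0" using s_eq[of j] N by simp
      hence "X *v v j = 0" by simp
      hence "v j \<bullet> (transpose X *v y) = 0" by (simp add: inner_transpose inner_transpose')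
      thus "((transpose X *v y) \<bullet> v j)\<^sup>2 = 0" by (simp add: inner_commute)
    qed
    hence "(\<Sum>j\<in>{j. s j = s i}. ((transpose X *v y) \<bullet> v j)\<^sup>2) = 0" by simp
    thus False using nondeg by (metis less_irrefl)
  qed
  define mu where "mu i = s i + lam" for i
  have mu_pos: "\<And>i. mu i > 0" unfolding mu_def using s_pos lam by (simp add: add_pos_nonneg)
  define S where "S = Sigma_lam lam X"
  have S_eig: "\<forall>i. S *v v i = mu i *\<^sub>R v i"
    unfolding S_def Sigma_lam_def mu_def using v_eig
    by (simp add: matrix_vector_mult_add_rdistrib scaleR_matrix_vector_assoc[symmetric] algebra_simps)
  have S_sum: "S = (\<Sum>i\<in>UNIV. mu i *\<^sub>R outer (v i))" by (rule eig_to_sum[OF S_eig])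
  define Binv where "Binv = (\<Sum>i\<in>UNIV. (1 / mu i) *\<^sub>R outer (v i))"
  have SB: "S ** Binv = mat 1"
  proof -
    have "\<And>z. (S ** Binv) *v z = mat 1 *v z"
    proof -
      fix z
      show "(S ** Binv) *v z = mat 1 *v z"
        by (rule coord_eq) (simp add: matrix_vector_mul_assoc[symmetric] S_sum Binv_def mat_coord mu_pos less_imp_neq[symmetric])
    qed
    thus ?thesis by (simp add: matrix_eq)
  qed
  have BS: "Binv ** S = mat 1" using SB by (simp add: matrix_left_right_inverse)
  have Sinv: "Sigma_lam_inv lam X = Binv"
  proof (cases "lam = 0")
    case True
    have SS: "Sigma_hat X = S" unfolding S_def Sigma_lam_def True by simp
    have "pinv S = Binv"
      unfolding pinv_def
    proof (rule the_equality)
      show "S ** Binv ** S = S \<and> Binv ** S ** Binv = Binv \<and> transpose (S ** Binv) = S ** Binv \<and> transpose (Binv ** S) = Binv ** S"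
        using SB BS by simp
    next
      fix B' assume "S ** B' ** S = S \<and> B' ** S ** B' = B' \<and> transpose (S ** B') = S ** B' \<and> transpose (B' ** S) = B' ** S"
      hence "Binv ** (S ** B' ** S) ** Binv = Binv ** S ** Binv" by simp
      hence "B' ** S ** Binv = Binv" using SB BS by (simp add: matrix_mul_assoc)
      moreover have "B' ** S ** Binv = B'" using SB by (metis matrix_mul_assoc matrix_mul_rid)
      ultimately show "B' = Binv" by simp
    qed
    thus ?thesis unfolding Sigma_lam_inv_def SS using True by simp
  next
    case False
    have ex: "\<exists>A'. S ** A' = mat 1 \<and> A' ** S = mat 1" using SB BS by blast
    have "S ** matrix_inv S = mat 1 \<and> matrix_inv S ** S = mat 1"
      unfolding matrix_inv_def by (rule someI_ex[OF ex])
    hence "matrix_inv S = (Binv ** S) ** matrix_inv S" using BS by simp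
    also have "\<dots> = Binv" using \<open>S ** matrix_inv S = mat 1 \<and> _\<close> by (simp add: matrix_mul_assoc[symmetric])
    finally show ?thesis unfolding Sigma_lam_inv_def S_def using False by simp
  qed
  have Isq: "Sigma_lam_invsqrt lam X = (\<Sum>i\<in>UNIV. sqrt (1 / mu i) *\<^sub>R outer (v i))"
    unfolding Sigma_lam_invsqrt_def Sinv
    by (rule matfun_eq[OF v_orth]) (simp add: Binv_def sum_eig)
  have MF: "\<And>g. matfun g S = (\<Sum>i\<in>UNIV. g (mu i) *\<^sub>R outer (v i))"
    by (rule matfun_eq[OF v_orth S_eig])
  define Y where "Y j = (1/N) * sqrt (1 / mu j) * (v j \<bullet> (transpose X *v y))" for j
  define E where "E j = (1/N) * sqrt (1 / mu j) * (v j \<bullet> (transpose X *v eps))" for j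
  define w where "w j = (Y j)\<^sup>2" for j
  have Yc: "\<And>j. v j \<bullet> y_lam lam X y = Y j"
    unfolding y_lam_def Y_def N_def[symmetric] Isq by (simp add: mat_coord)
  have Ec: "\<And>j. v j \<bullet> eps_lam lam X eps = E j"
    unfolding eps_lam_def E_def N_def[symmetric] Isq by (simp add: mat_coord)
  have cgs: "cgsetup w mu"
  proof
    show "\<And>i. 0 < mu i" by (rule mu_pos)
    show "\<And>i. 0 \<le> w i" unfolding w_def by simp
    fix i
    have "(\<Sum>j\<in>{j. s j = s i}. ((transpose X *v y) \<bullet> v j)\<^sup>2) \<noteq> 0" using nondeg by (metis less_irrefl)
    then obtain j where j: "s j = s i" "((transpose X *v y) \<bullet> v j)\<^sup>2 \<noteq> 0"
      by (metis (mono_tags, lifting) mem_Collect_eq sum.neutral)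
    have "Y j \<noteq> 0" unfolding Y_def using j(2) N mu_pos[of j] by (simp add: inner_commute)
    hence "w j > 0" unfolding w_def by simp
    moreover have "mu j = mu i" unfolding mu_def using j(1) by simp
    ultimately show "\<exists>j. mu j = mu i \<and> 0 < w j" by blast
  qed
  interpret cg: cgsetup w mu by (rule cgs)
  have normid: "\<And>P. (norm (matfun (poly P) S *v y_lam lam X y))\<^sup>2 = ipw w mu P P"
    unfolding norm_coord MF mat_coord Yc ipw_def w_def by (simp add: power2_eq_square mult_ac)
  have cgeq: "\<And>K. cg_poly S (y_lam lam X y) K = cgw w mu K"
    unfolding cg_poly_def cgw_def normid ..
  have cgieq: "cg_poly_interp S (y_lam lam X y) t = cgi w mu t"
    unfolding cg_poly_interp_def cgi_def cgeq ..
  define rho where "rho = \<bar>poly (pderiv (cgi w mu t)) 0\<bar>"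
  have rhoeq: "rho_cg lam X y t = rho" unfolding rho_cg_def rho_def S_def[symmetric] cgieq ..
  have rho0: "rho \<ge> 0" unfolding rho_def by simp
  have neig: "num_distinct_eigs S = card (range mu)"
  proof -
    have "{c. \<exists>z. z \<noteq> 0 \<and> S *v z = c *\<^sub>R z} = range mu"
    proof
      show "range mu \<subseteq> {c. \<exists>z. z \<noteq> 0 \<and> S *v z = c *\<^sub>R z}"
      proof
        fix c assume "c \<in> range mu"
        then obtain i where "c = mu i" by auto
        moreover have "v i \<noteq> 0" using orth[rule_format, of i i] by auto
        ultimately show "c \<in> {c. \<exists>z. z \<noteq> 0 \<and> S *v z = c *\<^sub>R z}" using S_eig by blast
      qed
    next
      show "{c. \<exists>z. z \<noteq> 0 \<and> S *v z = c *\<^sub>R z} \<subseteq> range mu"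
      proof
        fix c assume "c \<in> {c. \<exists>z. z \<noteq> 0 \<and> S *v z = c *\<^sub>R z}"
        then obtain z where z: "z \<noteq> 0" "S *v z = c *\<^sub>R z" by auto
        have "\<exists>j. v j \<bullet> z \<noteq> 0"
        proof (rule ccontr)
          assume "\<not> (\<exists>j. v j \<bullet> z \<noteq> 0)"
          hence "z = 0" by (intro coord_eq) simp
          thus False using z by simp
        qed
        then obtain j where j: "v j \<bullet> z \<noteq> 0" by blast
        have "mu j * (v j \<bullet> z) = v j \<bullet> (S *v z)" unfolding S_sum mat_coord ..
        also have "\<dots> = c * (v j \<bullet> z)" using z by simp
        finally have "c = mu j" using j by simp
        thus "c \<in> range mu" by simp
      qed
    qed
    thus ?thesis unfolding num_distinct_eigs_def by simp
  qed
  have tm: "t \<le> real cg.m" using t(2) unfolding S_def[symmetric] neig .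
  have core: "(\<Sum>i\<in>UNIV. (E i - poly (cgi w mu t) (mu i) * Y i)\<^sup>2)
     \<le> 2 * (\<Sum>i\<in>UNIV. exp (- (rho * mu i)) * (Y i - E i)\<^sup>2)
       + 2 * (\<Sum>i\<in>UNIV. min (rho * mu i) 1 * (E i)\<^sup>2)"
    unfolding rho_def by (rule cg.core_ineq[OF w_def t(1) tm])
  define c where "c j = v j \<bullet> (Sigma_hat X *v beta0)" for j
  have YE: "\<And>j. Y j - E j = sqrt (1 / mu j) * c j"
  proof -
    fix j
    have "v j \<bullet> (transpose X *v y) - v j \<bullet> (transpose X *v eps) = v j \<bullet> (transpose X *v (X *v beta0))"
      unfolding model by (simp add: matrix_vector_right_distrib inner_add_right)
    thus "Y j - E j = sqrt (1 / mu j) * c j"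
      unfolding Y_def E_def c_def SH by (simp add: algebra_simps)
  qed
  have blc: "\<And>j. v j \<bullet> beta_lam lam X beta0 = (1 / mu j) * c j"
    unfolding beta_lam_def Sinv Binv_def c_def by (simp add: mat_coord)
  have bcg: "\<And>j. v j \<bullet> beta_cg lam X y t = sqrt (1 / mu j) * (Y j - poly (cgi w mu t) (mu j) * Y j)"
    unfolding beta_cg_def Isq S_def[symmetric] cgieq
    by (simp add: mat_coord MF matrix_vector_mult_diff_rdistrib inner_diff_right Yc algebra_simps)
  have sq: "\<And>j. sqrt (mu j) * sqrt (1 / mu j) = 1"
  proof -
    fix j
    have "sqrt (mu j) * sqrt (1 / mu j) = sqrt (mu j * (1 / mu j))" by (rule real_sqrt_mult[symmetric])
    also have "mu j * (1 / mu j) = 1" using mu_pos[of j] by simp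
    finally show "sqrt (mu j) * sqrt (1 / mu j) = 1" by simp
  qed
  have sq2: "\<And>j. sqrt (mu j) * (1 / mu j) = sqrt (1 / mu j)"
  proof -
    fix j
    have p: "sqrt (mu j) > 0" using mu_pos[of j] by simp
    have m: "sqrt (mu j) * sqrt (mu j) = mu j" using mu_pos[of j] by simp
    have "sqrt (mu j) * (1 / mu j) = 1 / sqrt (mu j)"
    proof -
      have "sqrt (mu j) * (1 / mu j) * sqrt (mu j) = 1" using m mu_pos[of j]
        by (metis mult.commute nonzero_eq_divide_eq less_irrefl times_divide_eq_right mult_1_right)
      thus ?thesis using p by (simp add: field_simps)
    qed
    also have "\<dots> = sqrt (1 / mu j)" by (simp add: real_sqrt_divide)
    finally show "sqrt (mu j) * (1 / mu j) = sqrt (1 / mu j)" .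
  qed
  have L: "(norm (matfun sqrt (Sigma_lam lam X) *v (beta_cg lam X y t - beta_lam lam X beta0)))\<^sup>2
       = (\<Sum>i\<in>UNIV. (E i - poly (cgi w mu t) (mu i) * Y i)\<^sup>2)"
    unfolding S_def[symmetric] norm_coord MF mat_coord inner_diff_right bcg blc
  proof (rule sum.cong[OF refl])
    fix j
    have "sqrt (mu j) * (sqrt (1 / mu j) * (Y j - poly (cgi w mu t) (mu j) * Y j) - 1 / mu j * c j)
        = (sqrt (mu j) * sqrt (1 / mu j)) * (Y j - poly (cgi w mu t) (mu j) * Y j) - (sqrt (mu j) * (1 / mu j)) * c j"
      by (simp add: algebra_simps)
    also have "\<dots> = E j - poly (cgi w mu t) (mu j) * Y j" unfolding sq sq2 using YE[of j] by (simp add: algebra_simps)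
    finally show "(sqrt (mu j) * (sqrt (1 / mu j) * (Y j - poly (cgi w mu t) (mu j) * Y j) - 1 / mu j * c j))\<^sup>2
        = (E j - poly (cgi w mu t) (mu j) * Y j)\<^sup>2" by simp
  qed
  have R1: "(norm (matfun sqrt (Sigma_lam lam X) *v
               (matfun (\<lambda>x. exp (- rho_cg lam X y t * x / 2)) (Sigma_lam lam X) *v beta_lam lam X beta0)))\<^sup>2
       = (\<Sum>i\<in>UNIV. exp (- (rho * mu i)) * (Y i - E i)\<^sup>2)"
    unfolding S_def[symmetric] norm_coord MF mat_coord blc rhoeq
  proof (rule sum.cong[OF refl])
    fix j
    have e: "(exp (- rho * mu j / 2))\<^sup>2 = exp (- (rho * mu j))"
      by (simp add: power2_eq_square exp_add[symmetric])
    have "(sqrt (mu j) * (exp (- rho * mu j / 2) * (1 / mu j * c j)))\<^sup>2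
        = (exp (- rho * mu j / 2))\<^sup>2 * (sqrt (mu j) * (1 / mu j) * c j)\<^sup>2"
      by (simp add: power2_eq_square algebra_simps)
    also have "\<dots> = exp (- (rho * mu j)) * (Y j - E j)\<^sup>2" unfolding e sq2 YE ..
    finally show "(sqrt (mu j) * (exp (- rho * mu j / 2) * (1 / mu j * c j)))\<^sup>2 = exp (- (rho * mu j)) * (Y j - E j)\<^sup>2" .
  qed
  have R2: "(norm (matfun (\<lambda>x. sqrt (min (rho_cg lam X y t * x) 1)) (Sigma_lam lam X) *v eps_lam lam X eps))\<^sup>2
       = (\<Sum>i\<in>UNIV. min (rho * mu i) 1 * (E i)\<^sup>2)"
    unfolding S_def[symmetric] norm_coord MF mat_coord Ec rhoeq
  proof (rule sum.cong[OF refl])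
    fix j
    have "min (rho * mu j) 1 \<ge> 0" using rho0 mu_pos[of j] by simp
    thus "(sqrt (min (rho * mu j) 1) * E j)\<^sup>2 = min (rho * mu j) 1 * (E j)\<^sup>2"
      by (simp add: power_mult_distrib)
  qed
  show ?thesis unfolding L R1 R2 using core .
qed

end
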